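(* Let $f$ satisfy Assumption A, $g$ satisfy Assumption B, $L>L_f$ and $1/L>s_0$. Let $(u_k)$ be a sequence of proximal gradient iterates with parameter $L$ and let $u_{k_n}\rightharpoonup u^*$ weakly in $L^2(\Omega)$ for some subsequence. Assume $\nabla f(u_{k_n})(x)\to\nabla f(u^* )(x)$ for almost every $x\in\Omega$. Then for almost all $x\in\Omega$, \[ u^*(x)\in\big(\mathcal{G}^0\cup\operatorname{conv}^\infty\mathcal{G}^+\cup\operatorname{conv}^\infty\mathcal{G}^-\big)\big(-\nabla f(u^* )(x)\big). \]
   Context: $\Omega\subset\mathbb{R}^n$ Lebesgue measurable with finite measure. Assumption A: $f:L^2(\Omega)\to\mathbb{R}$ bounded below, weakly lower semicontinuous, Fréchet differentiable, $\nabla f$ Lipschitz with constant $L_f$. Assumption B on $g:\mathbb{R}\to\mathbb{R}\cup\{+\infty\}$: (B1) lsc, symmetric, $g(0)=0$; (B2) $g(u)<\infty$ for some $u\ne0$; (B3) one of (B3a) $g$ twice differentiable on some $(0,\epsilon)$, $\limsup_{u\searrow0}g''(u)\in(-\infty,0)$; (B3b) same differentiability, $\lim_{u\searrow0}g''(u)=-\infty$; (B3c) $\liminf_{u\searrow0}g(u)>0$; (B4) $g\ge0$. $s_0:=0$ if (B3b) or (B3c) holds, otherwise $s_0:=-1/\limsup_{u\searrow0}g''(u)$. Proximal gradient iterates with parameter $L>0$: $(u_k)_{k\ge0}\subset L^2(\Omega)$, arbitrary $u_0$, each $u_{k+1}$ a global minimizer over $L^2(\Omega)$ of $f(u_k)+\int_\Omega\nabla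 f(u_k)(u-u_k)\,dx+\frac L2\|u-u_k\|^2_{L^2(\Omega)}+\int_\Omega g(u(x))\,dx$. $\mathcal{G}_L:\mathbb{R}\rightrightarrows\mathbb{R}$: $u\in\mathcal{G}_L(z)$ iff $u$ is a global minimizer of $v\mapsto -zv+\frac L2(v-u)^2+g(v)$; $\mathcal{G}^+(z):=\mathcal{G}_L(z)\cap(0,\infty)$, $\mathcal{G}^-(z):=\mathcal{G}_L(z)\cap(-\infty,0)$, $\mathcal{G}^0(z):=\mathcal{G}_L(z)\cap\{0\}$; unions of set-valued maps are taken pointwise. For $F:\mathbb{R}\rightrightarrows\mathbb{R}$, $(\operatorname{conv}^\infty F)(x):=\limsup_{k\to\infty}\operatorname{conv}\big(\bigcup_{|x'-x|<1/k}F(x')\big)$, where $\operatorname{conv}$ is the convex hull and the outer limit $\limsup_k A_k$ is the set of all limits of sequences $y_{k_j}\in A_{k_j}$ along subsequences. *)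

theory Defs
  imports "HOL-Analysis.Analysis"
begin

definition L2 :: "'a::euclidean_space set \<Rightarrow> ('a \<Rightarrow> real) set" where
  "L2 \<Omega> = {u. u \<in> borel_measurable (lebesgue_on \<Omega>) \<and>
                 integrable (lebesgue_on \<Omega>) (\<lambda>x. (u x)\<^sup>2)}"

definition L2_inner :: "'a::euclidean_space set \<Rightarrow> ('a \<Rightarrow> real) \<Rightarrow> ('a \<Rightarrow> real) \<Rightarrow> real" where
  "L2_inner \<Omega> u v = (\<integral>x. u x * v x \<partial>lebesgue_on \<Omega>)"

definition L2_norm :: "'a::euclidean_space set \<Rightarrow> ('a \<Rightarrow> real) \<Rightarrow> real" where
  "L2_norm \<Omega> u = sqrt (L2_inner \<Omega> u u)"

definition weak_conv_L2 :: "'a::euclidean_space set \<Rightarrow> (nat \<Rightarrow> 'a \<Rightarrow> real) \<Rightarrow> ('a \<Rightarrow> real) \<Rightarrow> bool" where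
  "weak_conv_L2 \<Omega> v w \<longleftrightarrow> (\<forall>k. v k \<in> L2 \<Omega>) \<and> w \<in> L2 \<Omega> \<and>
     (\<forall>h \<in> L2 \<Omega>. (\<lambda>k. L2_inner \<Omega> (v k) h) \<longlonglongrightarrow> L2_inner \<Omega> w h)"

definition assumption_A ::
  "'a::euclidean_space set \<Rightarrow> (('a \<Rightarrow> real) \<Rightarrow> real) \<Rightarrow> (('a \<Rightarrow> real) \<Rightarrow> 'a \<Rightarrow> real) \<Rightarrow> real \<Rightarrow> bool" where
  "assumption_A \<Omega> f gradf Lf \<longleftrightarrow>
     \<comment> \<open>f is a function on equivalence classes\<close>
     (\<forall>u \<in> L2 \<Omega>. \<forall>v \<in> L2 \<Omega>. (AE x in lebesgue_on \<Omega>. u x = v x) \<longrightarrow> f u = f v) \<and>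
     \<comment> \<open>bounded below\<close>
     (\<exists>c. \<forall>u \<in> L2 \<Omega>. c \<le> f u) \<and>
     \<comment> \<open>weakly (sequentially) lower semicontinuous\<close>
     (\<forall>v w. weak_conv_L2 \<Omega> v w \<longrightarrow> ereal (f w) \<le> liminf (\<lambda>k. ereal (f (v k)))) \<and>
     \<comment> \<open>Frechet differentiable with gradient gradf (Riesz representative)\<close>
     (\<forall>u \<in> L2 \<Omega>. gradf u \<in> L2 \<Omega> \<and>
        (\<forall>\<epsilon>>0. \<exists>\<delta>>0. \<forall>h \<in> L2 \<Omega>. L2_norm \<Omega> h < \<delta> \<longrightarrow>
            \<bar>f (\<lambda>x. u x + h x) - f u - L2_inner \<Omega> (gradf u) h\<bar> \<le> \<epsilon> * L2_norm \<Omega> h)) \<and>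
     \<comment> \<open>gradient Lipschitz with constant Lf\<close>
     0 \<le> Lf \<and>
     (\<forall>u \<in> L2 \<Omega>. \<forall>v \<in> L2 \<Omega>.
        L2_norm \<Omega> (\<lambda>x. gradf u x - gradf v x) \<le> Lf * L2_norm \<Omega> (\<lambda>x. u x - v x))"

definition lsc_ereal :: "(real \<Rightarrow> ereal) \<Rightarrow> bool" where
  "lsc_ereal g \<longleftrightarrow> (\<forall>x. g x \<le> Liminf (at x) g)"

definition twice_diff_near0 :: "(real \<Rightarrow> ereal) \<Rightarrow> bool" where
  "twice_diff_near0 g \<longleftrightarrow> (\<exists>\<epsilon>>0. \<forall>u \<in> {0<..<\<epsilon>}. g u \<noteq> \<infinity> \<and> g u \<noteq> -\<infinity> \<and>
      (\<lambda>v. real_of_ereal (g v)) differentiable (at u) \<and>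
      deriv (\<lambda>v. real_of_ereal (g v)) differentiable (at u))"

definition g2 :: "(real \<Rightarrow> ereal) \<Rightarrow> real \<Rightarrow> real" where
  "g2 g = deriv (deriv (\<lambda>v. real_of_ereal (g v)))"

definition B3a :: "(real \<Rightarrow> ereal) \<Rightarrow> bool" where
  "B3a g \<longleftrightarrow> twice_diff_near0 g \<and>
     Limsup (at_right 0) (\<lambda>u. ereal (g2 g u)) \<in> {-\<infinity><..<0}"

definition B3b :: "(real \<Rightarrow> ereal) \<Rightarrow> bool" where
  "B3b g \<longleftrightarrow> twice_diff_near0 g \<and>
     ((\<lambda>u. ereal (g2 g u)) \<longlongrightarrow> -\<infinity>) (at_right 0)"

definition B3c :: "(real \<Rightarrow> ereal) \<Rightarrow> bool" where
  "B3c g \<longleftrightarrow> Liminf (at_right 0) g > 0"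

definition assumption_B :: "(real \<Rightarrow> ereal) \<Rightarrow> bool" where
  "assumption_B g \<longleftrightarrow>
     lsc_ereal g \<and> (\<forall>u. g (-u) = g u) \<and> g 0 = 0 \<and>
     (\<exists>u. u \<noteq> 0 \<and> g u < \<infinity>) \<and>
     (B3a g \<or> B3b g \<or> B3c g) \<and>
     (\<forall>u. g u \<ge> 0)"

definition s0 :: "(real \<Rightarrow> ereal) \<Rightarrow> real" where
  "s0 g = (if B3b g \<or> B3c g then 0
           else - 1 / real_of_ereal (Limsup (at_right 0) (\<lambda>u. ereal (g2 g u))))"

text \<open>integral of g(u(x)) over Omega (g is nonnegative)\<close>
definition G_int :: "'a::euclidean_space set \<Rightarrow> (real \<Rightarrow> ereal) \<Rightarrow> ('a \<Rightarrow> real) \<Rightarrow> ereal" where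
  "G_int \<Omega> g u = enn2ereal (\<integral>\<^sup>+ x. e2ennreal (g (u x)) \<partial>lebesgue_on \<Omega>)"

definition prox_model ::
  "'a::euclidean_space set \<Rightarrow> (('a \<Rightarrow> real) \<Rightarrow> real) \<Rightarrow> (('a \<Rightarrow> real) \<Rightarrow> 'a \<Rightarrow> real) \<Rightarrow>
   (real \<Rightarrow> ereal) \<Rightarrow> real \<Rightarrow> ('a \<Rightarrow> real) \<Rightarrow> ('a \<Rightarrow> real) \<Rightarrow> ereal" where
  "prox_model \<Omega> f gradf g L uk u =
     ereal (f uk + L2_inner \<Omega> (gradf uk) (\<lambda>x. u x - uk x)
            + L / 2 * (L2_norm \<Omega> (\<lambda>x. u x - uk x))\<^sup>2) + G_int \<Omega> g u"

definition prox_grad_iterates ::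
  "'a::euclidean_space set \<Rightarrow> (('a \<Rightarrow> real) \<Rightarrow> real) \<Rightarrow> (('a \<Rightarrow> real) \<Rightarrow> 'a \<Rightarrow> real) \<Rightarrow>
   (real \<Rightarrow> ereal) \<Rightarrow> real \<Rightarrow> (nat \<Rightarrow> 'a \<Rightarrow> real) \<Rightarrow> bool" where
  "prox_grad_iterates \<Omega> f gradf g L uu \<longleftrightarrow>
     (\<forall>k. uu k \<in> L2 \<Omega>) \<and>
     (\<forall>k. \<forall>v \<in> L2 \<Omega>. prox_model \<Omega> f gradf g L (uu k) (uu (Suc k))
                      \<le> prox_model \<Omega> f gradf g L (uu k) v)"

definition GL :: "(real \<Rightarrow> ereal) \<Rightarrow> real \<Rightarrow> real \<Rightarrow> real set" where
  "GL g L z = {u. \<forall>v. ereal (- z * u + L / 2 * (u - u)\<^sup>2) + g u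
                      \<le> ereal (- z * v + L / 2 * (v - u)\<^sup>2) + g v}"

definition Gplus :: "(real \<Rightarrow> ereal) \<Rightarrow> real \<Rightarrow> real \<Rightarrow> real set" where
  "Gplus g L z = GL g L z \<inter> {0<..}"

definition Gminus :: "(real \<Rightarrow> ereal) \<Rightarrow> real \<Rightarrow> real \<Rightarrow> real set" where
  "Gminus g L z = GL g L z \<inter> {..<0}"

definition Gzero :: "(real \<Rightarrow> ereal) \<Rightarrow> real \<Rightarrow> real \<Rightarrow> real set" where
  "Gzero g L z = GL g L z \<inter> {0}"

definition outer_limit :: "(nat \<Rightarrow> real set) \<Rightarrow> real set" where
  "outer_limit A = {y. \<exists>r yy. strict_mono r \<and> (\<forall>j. yy j \<in> A (r j)) \<and> yy \<longlonglongrightarrow> y}"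

text \<open>conv^infty F; the index k runs over 1,2,3,... (written Suc k).\<close>
definition conv_inf :: "(real \<Rightarrow> real set) \<Rightarrow> real \<Rightarrow> real set" where
  "conv_inf F x = outer_limit (\<lambda>k. convex hull (\<Union>x' \<in> {x'. \<bar>x' - x\<bar> < 1 / real (Suc k)}. F x'))"

end

theory Submission
  imports Defs
begin


lemma L2_D: "u \<in> L2 \<Omega> \<Longrightarrow> u \<in> borel_measurable (lebesgue_on \<Omega>) \<and> integrable (lebesgue_on \<Omega>) (\<lambda>x. (u x)\<^sup>2)"
  by (simp add: L2_def)

lemma two_ab_le: "2 * \<bar>a * b\<bar> \<le> (a::real)\<^sup>2 + b\<^sup>2"
proof -
  have "0 \<le> (\<bar>a\<bar> - \<bar>b\<bar>)\<^sup>2" by simp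
  also have "\<dots> = a\<^sup>2 + b\<^sup>2 - 2 * \<bar>a * b\<bar>"
    by (simp add: power2_eq_square algebra_simps abs_mult)
  finally show ?thesis by simp
qed

lemma sq_sum_le: "(a + b)\<^sup>2 \<le> 2 * (a::real)\<^sup>2 + 2 * b\<^sup>2"
proof -
  have "0 \<le> (a - b)\<^sup>2" by simp
  then show ?thesis by (simp add: power2_eq_square algebra_simps)
qed

lemma L2_mult_integrable:
  assumes "u \<in> L2 \<Omega>" "v \<in> L2 \<Omega>"
  shows "integrable (lebesgue_on \<Omega>) (\<lambda>x. u x * v x)"
proof -
  have "integrable (lebesgue_on \<Omega>) (\<lambda>x. (u x)\<^sup>2 + (v x)\<^sup>2)"
    using assms by (auto simp: L2_def)
  moreover have "(\<lambda>x. u x * v x) \<in> borel_measurable (lebesgue_on \<Omega>)"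
    using assms by (auto simp: L2_def)
  moreover have "\<And>x. norm (u x * v x) \<le> norm ((u x)\<^sup>2 + (v x)\<^sup>2)"
  proof -
    fix x
    have "2 * \<bar>u x * v x\<bar> \<le> (u x)\<^sup>2 + (v x)\<^sup>2"
      by (rule two_ab_le)
    then have "\<bar>u x * v x\<bar> \<le> (u x)\<^sup>2 + (v x)\<^sup>2" using abs_ge_zero[of "u x * v x"] by linarith
    then show "norm (u x * v x) \<le> norm ((u x)\<^sup>2 + (v x)\<^sup>2)" by simp
  qed
  ultimately show ?thesis using Bochner_Integration.integrable_bound[OF _ _ AE_I2] by blast
qed

lemma L2_lin:
  assumes "u \<in> L2 \<Omega>" "v \<in> L2 \<Omega>"
  shows "(\<lambda>x. a * u x + b * v x) \<in> L2 \<Omega>"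
proof -
  have m: "(\<lambda>x. a * u x + b * v x) \<in> borel_measurable (lebesgue_on \<Omega>)"
    using assms by (auto simp: L2_def)
  have m2: "(\<lambda>x. (a * u x + b * v x)\<^sup>2) \<in> borel_measurable (lebesgue_on \<Omega>)"
    using m by measurable
  have i: "integrable (lebesgue_on \<Omega>) (\<lambda>x. 2*a\<^sup>2*(u x)\<^sup>2 + 2*b\<^sup>2*(v x)\<^sup>2)"
    using assms by (auto simp: L2_def)
  have b: "\<And>x. norm ((a * u x + b * v x)\<^sup>2) \<le> norm (2*a\<^sup>2*(u x)\<^sup>2 + 2*b\<^sup>2*(v x)\<^sup>2)"
  proof -
    fix x
    have "(a * u x + b * v x)\<^sup>2 \<le> 2*a\<^sup>2*(u x)\<^sup>2 + 2*b\<^sup>2*(v x)\<^sup>2"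
      using sq_sum_le[of "a * u x" "b * v x"] by (simp add: power_mult_distrib)
    then show "norm ((a * u x + b * v x)\<^sup>2) \<le> norm (2*a\<^sup>2*(u x)\<^sup>2 + 2*b\<^sup>2*(v x)\<^sup>2)" by simp
  qed
  have "integrable (lebesgue_on \<Omega>) (\<lambda>x. (a * u x + b * v x)\<^sup>2)"
    by (rule Bochner_Integration.integrable_bound[OF i m2 AE_I2[OF b]])
  with m show ?thesis by (simp add: L2_def)
qed


lemma L2_inner_sym: "L2_inner \<Omega> a b = L2_inner \<Omega> b a"
  by (simp add: L2_inner_def mult.commute)

lemma L2_inner_lin:
  assumes "a \<in> L2 \<Omega>" "h \<in> L2 \<Omega>" "k \<in> L2 \<Omega>"
  shows "L2_inner \<Omega> a (\<lambda>x. s * h x + t * k x) = s * L2_inner \<Omega> a h + t * L2_inner \<Omega> a k"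
proof -
  have i1: "integrable (lebesgue_on \<Omega>) (\<lambda>x. s * (a x * h x))"
    using L2_mult_integrable[OF assms(1,2)] by simp
  have i2: "integrable (lebesgue_on \<Omega>) (\<lambda>x. t * (a x * k x))"
    using L2_mult_integrable[OF assms(1,3)] by simp
  have "L2_inner \<Omega> a (\<lambda>x. s * h x + t * k x) = (\<integral>x. s * (a x * h x) + t * (a x * k x) \<partial>lebesgue_on \<Omega>)"
    unfolding L2_inner_def by (rule Bochner_Integration.integral_cong) (auto simp: algebra_simps)
  also have "\<dots> = s * L2_inner \<Omega> a h + t * L2_inner \<Omega> a k"
    using i1 i2 by (simp add: L2_inner_def)
  finally show ?thesis .
qed

lemma L2_inner_scale:
  "L2_inner \<Omega> a (\<lambda>x. s * h x) = s * L2_inner \<Omega> a h"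
proof -
  have "L2_inner \<Omega> a (\<lambda>x. s * h x) = (\<integral>x. s * (a x * h x) \<partial>lebesgue_on \<Omega>)"
    unfolding L2_inner_def by (rule Bochner_Integration.integral_cong) (auto simp: algebra_simps)
  then show ?thesis by (simp add: L2_inner_def)
qed

lemma L2_inner_diff_left:
  assumes "a \<in> L2 \<Omega>" "b \<in> L2 \<Omega>" "h \<in> L2 \<Omega>"
  shows "L2_inner \<Omega> (\<lambda>x. a x - b x) h = L2_inner \<Omega> a h - L2_inner \<Omega> b h"
proof -
  have "L2_inner \<Omega> (\<lambda>x. a x - b x) h = L2_inner \<Omega> h (\<lambda>x. 1 * a x + (-1) * b x)"
    by (simp add: L2_inner_sym)
  also have "\<dots> = 1 * L2_inner \<Omega> h a + (-1) * L2_inner \<Omega> h b"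
    by (rule L2_inner_lin[OF assms(3,1,2)])
  finally show ?thesis by (simp add: L2_inner_sym)
qed

lemma L2_inner_self_nonneg: "0 \<le> L2_inner \<Omega> h h"
  unfolding L2_inner_def by (rule integral_nonneg_AE) (simp add: AE_I2)

lemma L2_norm_nonneg: "0 \<le> L2_norm \<Omega> h"
  using L2_inner_self_nonneg[of \<Omega> h] by (simp add: L2_norm_def)

lemma L2_norm_sq: "(L2_norm \<Omega> h)\<^sup>2 = L2_inner \<Omega> h h"
  using L2_inner_self_nonneg[of \<Omega> h] by (simp add: L2_norm_def)

lemma L2_norm_scale: "L2_norm \<Omega> (\<lambda>x. s * h x) = \<bar>s\<bar> * L2_norm \<Omega> h"
proof -
  have "L2_inner \<Omega> (\<lambda>x. s * h x) (\<lambda>x. s * h x) = (\<integral>x. s\<^sup>2 * (h x * h x) \<partial>lebesgue_on \<Omega>)"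
    unfolding L2_inner_def by (rule Bochner_Integration.integral_cong) (auto simp: power2_eq_square)
  also have "\<dots> = s\<^sup>2 * L2_inner \<Omega> h h" by (simp add: L2_inner_def)
  finally have e: "L2_inner \<Omega> (\<lambda>x. s * h x) (\<lambda>x. s * h x) = s\<^sup>2 * L2_inner \<Omega> h h" .
  show ?thesis unfolding L2_norm_def e real_sqrt_mult by simp
qed

lemma quad_discr:
  fixes A B C :: real
  assumes "\<And>t. 0 \<le> A - 2 * t * C + t\<^sup>2 * B" "0 \<le> B"
  shows "C\<^sup>2 \<le> A * B"
proof (cases "B = 0")
  case True
  show ?thesis
  proof (cases "C = 0")
    case False
    have "0 \<le> A - 2 * ((A + 1) / (2 * C)) * C" using assms(1)[of "(A+1)/(2*C)"] True by simp
    also have "2 * ((A + 1) / (2 * C)) * C = A + 1" using False by simp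
    finally show ?thesis by simp
  qed (use True in simp)
next
  case False
  then have Bp: "B > 0" using assms(2) by simp
  have "0 \<le> A - 2 * (C / B) * C + (C/B)\<^sup>2 * B" by (rule assms(1))
  also have "(C/B)\<^sup>2 * B = C * C / B" using Bp by (simp add: power2_eq_square)
  also have "2 * (C / B) * C = 2 * (C * C / B)" by simp
  finally have "C * C / B \<le> A" by simp
  then have "C * C \<le> A * B" using Bp by (simp add: pos_divide_le_eq)
  then show ?thesis by (simp add: power2_eq_square)
qed

lemma L2_CS:
  assumes "a \<in> L2 \<Omega>" "b \<in> L2 \<Omega>"
  shows "\<bar>L2_inner \<Omega> a b\<bar> \<le> L2_norm \<Omega> a * L2_norm \<Omega> b"
proof -
  define A where "A = L2_inner \<Omega> a a"
  define B where "B = L2_inner \<Omega> b b"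
  define C where "C = L2_inner \<Omega> a b"
  have "\<And>t. 0 \<le> A - 2 * t * C + t\<^sup>2 * B"
  proof -
    fix t
    have ab: "(\<lambda>x. 1 * a x + (-t) * b x) \<in> L2 \<Omega>" by (rule L2_lin[OF assms])
    have "0 \<le> L2_inner \<Omega> (\<lambda>x. 1 * a x + (-t) * b x) (\<lambda>x. 1 * a x + (-t) * b x)"
      by (rule L2_inner_self_nonneg)
    also have "\<dots> = 1 * L2_inner \<Omega> (\<lambda>x. 1 * a x + (-t) * b x) a + (-t) * L2_inner \<Omega> (\<lambda>x. 1 * a x + (-t) * b x) b"
      by (rule L2_inner_lin[OF ab assms])
    also have "L2_inner \<Omega> (\<lambda>x. 1 * a x + (-t) * b x) a = L2_inner \<Omega> a (\<lambda>x. 1 * a x + (-t) * b x)"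
      by (rule L2_inner_sym)
    also have "\<dots> = 1 * A + (-t) * C"
      unfolding A_def C_def by (rule L2_inner_lin[OF assms(1) assms])
    also have "L2_inner \<Omega> (\<lambda>x. 1 * a x + (-t) * b x) b = L2_inner \<Omega> b (\<lambda>x. 1 * a x + (-t) * b x)"
      by (rule L2_inner_sym)
    also have "\<dots> = 1 * L2_inner \<Omega> b a + (-t) * B"
      unfolding B_def by (rule L2_inner_lin[OF assms(2) assms])
    also have "L2_inner \<Omega> b a = C" unfolding C_def by (rule L2_inner_sym)
    finally show "0 \<le> A - 2 * t * C + t\<^sup>2 * B" by (simp add: algebra_simps power2_eq_square)
  qed
  then have "C\<^sup>2 \<le> A * B" by (rule quad_discr) (simp add: B_def L2_inner_self_nonneg)
  then have "sqrt (C\<^sup>2) \<le> sqrt (A * B)" by (rule real_sqrt_le_mono)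
  then have "\<bar>C\<bar> \<le> sqrt A * sqrt B" by (simp add: real_sqrt_mult)
  then show ?thesis by (simp add: C_def A_def B_def L2_norm_def)
qed


locale smoothA =
  fixes \<Omega> :: "'a::euclidean_space set" and f :: "('a \<Rightarrow> real) \<Rightarrow> real"
    and gradf :: "('a \<Rightarrow> real) \<Rightarrow> 'a \<Rightarrow> real" and Lf :: real
  assumes A: "assumption_A \<Omega> f gradf Lf"
begin

lemma grad_L2: "u \<in> L2 \<Omega> \<Longrightarrow> gradf u \<in> L2 \<Omega>"
  using A unfolding assumption_A_def by blast

lemma frechet: "u \<in> L2 \<Omega> \<Longrightarrow> \<epsilon> > 0 \<Longrightarrow> \<exists>\<delta>>0. \<forall>h \<in> L2 \<Omega>. L2_norm \<Omega> h < \<delta> \<longrightarrow>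
            \<bar>f (\<lambda>x. u x + h x) - f u - L2_inner \<Omega> (gradf u) h\<bar> \<le> \<epsilon> * L2_norm \<Omega> h"
  using A unfolding assumption_A_def by blast

lemma Lf_nonneg: "0 \<le> Lf"
  using A unfolding assumption_A_def by blast

lemma lip: "u \<in> L2 \<Omega> \<Longrightarrow> v \<in> L2 \<Omega> \<Longrightarrow>
        L2_norm \<Omega> (\<lambda>x. gradf u x - gradf v x) \<le> Lf * L2_norm \<Omega> (\<lambda>x. u x - v x)"
  using A unfolding assumption_A_def by blast

lemma f_bdd: "\<exists>c. \<forall>u \<in> L2 \<Omega>. c \<le> f u"
  using A unfolding assumption_A_def by blast

lemma phi_deriv:
  assumes u: "u \<in> L2 \<Omega>" and h: "h \<in> L2 \<Omega>"
  shows "((\<lambda>t. f (\<lambda>x. u x + t * h x)) has_real_derivative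
            L2_inner \<Omega> (gradf (\<lambda>x. u x + t * h x)) h) (at t)"
proof -
  define w where "w = (\<lambda>x. u x + t * h x)"
  define N where "N = L2_norm \<Omega> h"
  define D where "D = L2_inner \<Omega> (gradf w) h"
  have N0: "0 \<le> N" by (simp add: N_def L2_norm_nonneg)
  have wL2: "w \<in> L2 \<Omega>" unfolding w_def using L2_lin[OF u h, of 1 t] by simp
  have "((\<lambda>s. (f (\<lambda>x. u x + (t + s) * h x) - f (\<lambda>x. u x + t * h x)) / s) \<longlongrightarrow> D) (at 0)"
  proof (rule tendstoI)
    fix e :: real assume e: "e > 0"
    define e' where "e' = e / (N + 1)"
    have e': "e' > 0" using e N0 by (simp add: e'_def)
    obtain \<delta> where dp: "\<delta> > 0" and fr: "\<forall>k \<in> L2 \<Omega>. L2_norm \<Omega> k < \<delta> \<longrightarrow>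
            \<bar>f (\<lambda>x. w x + k x) - f w - L2_inner \<Omega> (gradf w) k\<bar> \<le> e' * L2_norm \<Omega> k"
      using frechet[OF wL2 e'] by blast
    show "\<forall>\<^sub>F s in at 0. dist ((f (\<lambda>x. u x + (t + s) * h x) - f (\<lambda>x. u x + t * h x)) / s) D < e"
      unfolding eventually_at
    proof (intro exI[of _ "\<delta> / (N + 1)"] conjI ballI impI)
      show "\<delta> / (N + 1) > 0" using dp N0 by simp
      fix s :: real assume "s \<in> UNIV" and s: "s \<noteq> 0 \<and> dist s 0 < \<delta> / (N + 1)"
      then have sd: "\<bar>s\<bar> * (N + 1) < \<delta>" using N0 by (simp add: pos_less_divide_eq)
      have kL2: "(\<lambda>x. s * h x) \<in> L2 \<Omega>" using L2_lin[OF h h, of s 0] by simp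
      have kn: "L2_norm \<Omega> (\<lambda>x. s * h x) = \<bar>s\<bar> * N" by (simp add: L2_norm_scale N_def)
      have "\<bar>s\<bar> * N \<le> \<bar>s\<bar> * (N + 1)" by (simp add: mult_left_mono)
      then have "L2_norm \<Omega> (\<lambda>x. s * h x) < \<delta>" using sd kn by linarith
      with fr kL2 have b: "\<bar>f (\<lambda>x. w x + s * h x) - f w - L2_inner \<Omega> (gradf w) (\<lambda>x. s * h x)\<bar>
           \<le> e' * (\<bar>s\<bar> * N)" using kn by auto
      have eq1: "(\<lambda>x. w x + s * h x) = (\<lambda>x. u x + (t + s) * h x)"
        by (simp add: w_def algebra_simps)
      have eq2: "L2_inner \<Omega> (gradf w) (\<lambda>x. s * h x) = s * D" by (simp add: L2_inner_scale D_def)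
      have b2: "\<bar>f (\<lambda>x. u x + (t + s) * h x) - f (\<lambda>x. u x + t * h x) - s * D\<bar> \<le> e' * (\<bar>s\<bar> * N)"
      proof -
        from b have "\<bar>f (\<lambda>x. u x + (t + s) * h x) - f w - s * D\<bar> \<le> e' * (\<bar>s\<bar> * N)"
          by (simp only: eq1 eq2)
        then show ?thesis by (simp only: w_def)
      qed
      have sp: "\<bar>s\<bar> > 0" using s by simp
      have "\<bar>(f (\<lambda>x. u x + (t + s) * h x) - f (\<lambda>x. u x + t * h x)) / s - D\<bar>
          = \<bar>f (\<lambda>x. u x + (t + s) * h x) - f (\<lambda>x. u x + t * h x) - s * D\<bar> / \<bar>s\<bar>"
      proof -
        have "(f (\<lambda>x. u x + (t + s) * h x) - f (\<lambda>x. u x + t * h x) - s * D) / s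
            = (f (\<lambda>x. u x + (t + s) * h x) - f (\<lambda>x. u x + t * h x)) / s - D"
          using s by (simp add: diff_divide_distrib)
        then show ?thesis by (metis abs_divide)
      qed
      also have "\<dots> \<le> e' * (\<bar>s\<bar> * N) / \<bar>s\<bar>" by (rule divide_right_mono[OF b2]) simp
      also have "\<dots> = e' * N" using sp by simp
      also have "\<dots> < e" using e N0 unfolding e'_def by (simp add: field_simps)
      finally show "dist ((f (\<lambda>x. u x + (t + s) * h x) - f (\<lambda>x. u x + t * h x)) / s) D < e"
        by (simp add: dist_real_def)
    qed
  qed
  then show ?thesis unfolding DERIV_def D_def w_def by simp
qed

lemma L2_diff: "u \<in> L2 \<Omega> \<Longrightarrow> v \<in> L2 \<Omega> \<Longrightarrow> (\<lambda>x. v x - u x) \<in> L2 \<Omega>"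
  using L2_lin[of v \<Omega> u 1 "-1"] by simp

lemma descent:
  assumes u: "u \<in> L2 \<Omega>" and v: "v \<in> L2 \<Omega>"
  shows "f v \<le> f u + L2_inner \<Omega> (gradf u) (\<lambda>x. v x - u x) + Lf / 2 * (L2_norm \<Omega> (\<lambda>x. v x - u x))\<^sup>2"
proof -
  define h where "h = (\<lambda>x. v x - u x)"
  have h: "h \<in> L2 \<Omega>" unfolding h_def by (rule L2_diff[OF u v])
  define N where "N = L2_norm \<Omega> h"
  have N0: "0 \<le> N" by (simp add: N_def L2_norm_nonneg)
  define D where "D = (\<lambda>t. L2_inner \<Omega> (gradf (\<lambda>x. u x + t * h x)) h)"
  define \<psi> where "\<psi> = (\<lambda>t. f (\<lambda>x. u x + t * h x) - t * D 0 - Lf / 2 * t\<^sup>2 * N\<^sup>2)"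
  have dpsi: "\<And>t. (\<psi> has_real_derivative (D t - D 0 - Lf * t * N\<^sup>2)) (at t)"
  proof -
    fix t
    show "(\<psi> has_real_derivative (D t - D 0 - Lf * t * N\<^sup>2)) (at t)"
      unfolding \<psi>_def D_def
      by (auto intro!: derivative_eq_intros phi_deriv[OF u h] simp: power2_eq_square)
  qed
  have wL2: "\<And>t. (\<lambda>x. u x + t * h x) \<in> L2 \<Omega>" using L2_lin[OF u h, of 1] by simp
  have D0: "D 0 = L2_inner \<Omega> (gradf u) h" by (simp add: D_def)
  have bound: "D t - D 0 \<le> Lf * t * N\<^sup>2" if t: "0 < t" for t
  proof -
    have "D t - D 0 = L2_inner \<Omega> (\<lambda>x. gradf (\<lambda>x. u x + t * h x) x - gradf u x) h"
      unfolding D0 by (simp add: D_def L2_inner_diff_left[OF grad_L2[OF wL2] grad_L2[OF u] h])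
    also have "\<dots> \<le> \<bar>\<dots>\<bar>" by simp
    also have "\<dots> \<le> L2_norm \<Omega> (\<lambda>x. gradf (\<lambda>x. u x + t * h x) x - gradf u x) * N"
      unfolding N_def by (rule L2_CS) (auto intro: L2_diff grad_L2 wL2 u h)
    also have "\<dots> \<le> (Lf * L2_norm \<Omega> (\<lambda>x. (u x + t * h x) - u x)) * N"
      by (rule mult_right_mono[OF lip[OF wL2 u] N0])
    also have "(\<lambda>x. (u x + t * h x) - u x) = (\<lambda>x. t * h x)" by simp
    also have "L2_norm \<Omega> (\<lambda>x. t * h x) = t * N" using t by (simp add: L2_norm_scale N_def)
    finally show ?thesis by (simp add: power2_eq_square mult.assoc)
  qed
  have cont: "continuous_on {0..1} \<psi>"
    using dpsi by (meson DERIV_isCont continuous_at_imp_continuous_on)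
  have "\<psi> 1 \<le> \<psi> 0"
    by (rule DERIV_nonpos_imp_decreasing_open[OF _ _ cont]) (use dpsi bound in force)+
  moreover have "(\<lambda>x. u x + 1 * h x) = v" by (simp add: h_def)
  ultimately show ?thesis by (simp add: \<psi>_def D0 N_def h_def)
qed

end


lemma zero_L2: "(\<lambda>x. 0) \<in> L2 \<Omega>"
  by (simp add: L2_def)

lemma L2_inner_zero_right: "L2_inner \<Omega> a (\<lambda>x. 0) = 0"
  by (simp add: L2_inner_def)

lemma L2_norm_zero: "L2_norm \<Omega> (\<lambda>x. 0) = 0"
  by (simp add: L2_norm_def L2_inner_def)

lemma G_int_nonneg: "0 \<le> G_int \<Omega> g u"
  by (simp add: G_int_def)

lemma prox_model_self: "prox_model \<Omega> f gradf g L u u = ereal (f u) + G_int \<Omega> g u"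
  by (simp add: prox_model_def L2_inner_zero_right L2_norm_zero)

locale setting = smoothA \<Omega> f gradf Lf
  for \<Omega> :: "'a::euclidean_space set" and f gradf Lf +
  fixes g :: "real \<Rightarrow> ereal" and L :: real and uu :: "nat \<Rightarrow> 'a \<Rightarrow> real"
  assumes \<Omega>l: "\<Omega> \<in> sets lebesgue" and \<Omega>fin: "emeasure lebesgue \<Omega> < \<infinity>"
    and B: "assumption_B g" and LLf: "Lf < L" and s0L: "s0 g < 1 / L"
    and it: "prox_grad_iterates \<Omega> f gradf g L uu"
begin

lemma uu_L2: "uu k \<in> L2 \<Omega>"
  using it by (simp add: prox_grad_iterates_def)

lemma uu_min: "v \<in> L2 \<Omega> \<Longrightarrow> prox_model \<Omega> f gradf g L (uu k) (uu (Suc k)) \<le> prox_model \<Omega> f gradf g L (uu k) v"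
  using it by (simp add: prox_grad_iterates_def)

lemma g0: "g 0 = 0" using B by (simp add: assumption_B_def)
lemma g_nonneg: "0 \<le> g u" using B by (simp add: assumption_B_def)
lemma g_sym: "g (- u) = g u" using B by (simp add: assumption_B_def)

lemma G_int_zero: "G_int \<Omega> g (\<lambda>x. 0) = 0"
proof -
  have "e2ennreal 0 = 0" by (metis e2ennreal_ereal ennreal_0 zero_ereal_def)
  moreover have "enn2ereal 0 = 0" using enn2ereal_ennreal[of 0] by simp
  ultimately show ?thesis by (simp add: G_int_def g0)
qed

lemma L_pos: "0 < L" using LLf Lf_nonneg by simp

lemma G_int_fin: "G_int \<Omega> g (uu (Suc k)) < \<infinity>"
proof -
  have "prox_model \<Omega> f gradf g L (uu k) (uu (Suc k)) \<le> prox_model \<Omega> f gradf g L (uu k) (\<lambda>x. 0)"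
    by (rule uu_min[OF zero_L2])
  then show ?thesis by (auto simp: prox_model_def G_int_zero)
qed

definition Gr :: "nat \<Rightarrow> real" where "Gr k = real_of_ereal (G_int \<Omega> g (uu k))"

lemma G_int_Gr: "G_int \<Omega> g (uu (Suc k)) = ereal (Gr (Suc k))"
  using G_int_fin[of k] G_int_nonneg[of \<Omega> g "uu (Suc k)"] unfolding Gr_def
  by (cases "G_int \<Omega> g (uu (Suc k))") auto

lemma Gr_nonneg: "0 \<le> Gr k"
  using G_int_nonneg[of \<Omega> g "uu k"] unfolding Gr_def by (simp add: real_of_ereal_pos)

definition nd :: "nat \<Rightarrow> real" where "nd k = L2_norm \<Omega> (\<lambda>x. uu (Suc k) x - uu k x)"

lemma decrease_ereal:
  "ereal (f (uu (Suc k)) + (L - Lf) / 2 * (nd k)\<^sup>2) + G_int \<Omega> g (uu (Suc k))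
     \<le> ereal (f (uu k)) + G_int \<Omega> g (uu k)"
proof -
  have d: "f (uu (Suc k)) \<le> f (uu k) + L2_inner \<Omega> (gradf (uu k)) (\<lambda>x. uu (Suc k) x - uu k x) + Lf / 2 * (nd k)\<^sup>2"
    unfolding nd_def by (rule descent[OF uu_L2 uu_L2])
  have "ereal (f (uu (Suc k)) + (L - Lf) / 2 * (nd k)\<^sup>2) + G_int \<Omega> g (uu (Suc k))
       \<le> prox_model \<Omega> f gradf g L (uu k) (uu (Suc k))"
    unfolding prox_model_def nd_def[symmetric]
  proof (rule add_right_mono)
    have e: "(L - Lf) / 2 * (nd k)\<^sup>2 = L / 2 * (nd k)\<^sup>2 - Lf / 2 * (nd k)\<^sup>2" by (simp add: left_diff_distrib diff_divide_distrib)
    show "ereal (f (uu (Suc k)) + (L - Lf) / 2 * (nd k)\<^sup>2)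
      \<le> ereal (f (uu k) + L2_inner \<Omega> (gradf (uu k)) (\<lambda>x. uu (Suc k) x - uu k x) + L / 2 * (nd k)\<^sup>2)"
      using d unfolding e by simp
  qed
  also have "\<dots> \<le> prox_model \<Omega> f gradf g L (uu k) (uu k)" by (rule uu_min[OF uu_L2])
  finally show ?thesis by (simp add: prox_model_self)
qed

lemma decrease:
  "f (uu (Suc (Suc k))) + Gr (Suc (Suc k)) + (L - Lf) / 2 * (nd (Suc k))\<^sup>2
     \<le> f (uu (Suc k)) + Gr (Suc k)"
  using decrease_ereal[of "Suc k"] unfolding G_int_Gr by simp

lemma nd_summable: "summable (\<lambda>k. (nd (Suc k))\<^sup>2)"
proof -
  obtain c where c: "\<forall>u \<in> L2 \<Omega>. c \<le> f u" using f_bdd by blast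
  define a where "a = (\<lambda>k. f (uu (Suc k)) + Gr (Suc k))"
  have cpos: "0 < (L - Lf) / 2" using LLf by simp
  have tel: "a n + (L - Lf) / 2 * (\<Sum>i<n. (nd (Suc i))\<^sup>2) \<le> a 0" for n
  proof (induction n)
    case (Suc n)
    have "a (Suc n) + (L - Lf) / 2 * (nd (Suc n))\<^sup>2 \<le> a n"
      using decrease[of n] by (simp add: a_def algebra_simps)
    then show ?case using Suc by (simp add: algebra_simps)
  qed simp
  have alow: "c \<le> a n" for n
    using c uu_L2 Gr_nonneg[of "Suc n"] unfolding a_def by (meson add_increasing2)
  show ?thesis
  proof (rule summableI_nonneg_bounded)
    show "0 \<le> (nd (Suc n))\<^sup>2" for n by simp
    show "(\<Sum>i<n. (nd (Suc i))\<^sup>2) \<le> (a 0 - c) / ((L - Lf) / 2)" for n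
    proof -
      have "(L - Lf) / 2 * (\<Sum>i<n. (nd (Suc i))\<^sup>2) \<le> a 0 - c" using tel[of n] alow[of n] by linarith
      then show ?thesis using cpos by (simp add: pos_le_divide_eq mult.commute)
    qed
  qed
qed

end


context setting begin

lemma int_sq_nd:
  "(\<integral>\<^sup>+x. ennreal ((uu (Suc k) x - uu k x)\<^sup>2) \<partial>lebesgue_on \<Omega>) = ennreal ((nd k)\<^sup>2)"
proof -
  have d: "(\<lambda>x. uu (Suc k) x - uu k x) \<in> L2 \<Omega>" by (rule L2_diff[OF uu_L2 uu_L2])
  then have i: "integrable (lebesgue_on \<Omega>) (\<lambda>x. (uu (Suc k) x - uu k x)\<^sup>2)" by (simp add: L2_def)
  have "(\<integral>\<^sup>+x. ennreal ((uu (Suc k) x - uu k x)\<^sup>2) \<partial>lebesgue_on \<Omega>)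
       = ennreal (\<integral>x. (uu (Suc k) x - uu k x)\<^sup>2 \<partial>lebesgue_on \<Omega>)"
    by (rule nn_integral_eq_integral[OF i]) simp
  also have "(\<integral>x. (uu (Suc k) x - uu k x)\<^sup>2 \<partial>lebesgue_on \<Omega>) = (nd k)\<^sup>2"
    unfolding nd_def L2_norm_sq L2_inner_def by (simp add: power2_eq_square)
  finally show ?thesis .
qed

lemma ae_diff0: "AE x in lebesgue_on \<Omega>. (\<lambda>k. uu (Suc k) x - uu k x) \<longlonglongrightarrow> 0"
proof -
  have meas: "\<And>k. uu k \<in> borel_measurable (lebesgue_on \<Omega>)" using uu_L2 by (simp add: L2_def)
  define F where "F = (\<lambda>k x. ennreal ((uu (Suc (Suc k)) x - uu (Suc k) x)\<^sup>2))"
  have Fm: "\<And>k. F k \<in> borel_measurable (lebesgue_on \<Omega>)"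
    unfolding F_def using meas by measurable
  have "(\<integral>\<^sup>+x. (\<Sum>k. F k x) \<partial>lebesgue_on \<Omega>) = (\<Sum>k. integral\<^sup>N (lebesgue_on \<Omega>) (F k))"
    by (rule nn_integral_suminf[OF Fm])
  also have "\<dots> = (\<Sum>k. ennreal ((nd (Suc k))\<^sup>2))"
    by (simp only: F_def int_sq_nd)
  also have "\<dots> \<noteq> \<infinity>"
    unfolding infinity_ennreal_def by (rule ennreal_suminf_neq_top[OF nd_summable]) simp
  finally have "(\<integral>\<^sup>+x. (\<Sum>k. F k x) \<partial>lebesgue_on \<Omega>) \<noteq> \<infinity>" .
  then have "AE x in lebesgue_on \<Omega>. (\<Sum>k. F k x) \<noteq> \<infinity>"
    by (intro nn_integral_PInf_AE) (use Fm in measurable)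
  then show ?thesis
  proof (rule AE_mp, intro AE_I2 impI)
    fix x assume "(\<Sum>k. F k x) \<noteq> \<infinity>"
    then have "(\<Sum>k. ennreal ((uu (Suc (Suc k)) x - uu (Suc k) x)\<^sup>2)) \<noteq> top"
      unfolding F_def infinity_ennreal_def .
    then have "summable (\<lambda>k. (uu (Suc (Suc k)) x - uu (Suc k) x)\<^sup>2)"
      by (rule summable_suminf_not_top[rotated]) simp
    then have "(\<lambda>k. (uu (Suc (Suc k)) x - uu (Suc k) x)\<^sup>2) \<longlonglongrightarrow> 0"
      by (rule summable_LIMSEQ_zero)
    then have "(\<lambda>k. sqrt ((uu (Suc (Suc k)) x - uu (Suc k) x)\<^sup>2)) \<longlonglongrightarrow> sqrt 0"
      by (rule tendsto_real_sqrt)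
    then have "(\<lambda>k. \<bar>uu (Suc (Suc k)) x - uu (Suc k) x\<bar>) \<longlonglongrightarrow> 0" by simp
    then have "(\<lambda>k. uu (Suc (Suc k)) x - uu (Suc k) x) \<longlonglongrightarrow> 0"
      by (simp add: tendsto_rabs_zero_iff)
    then show "(\<lambda>k. uu (Suc k) x - uu k x) \<longlonglongrightarrow> 0"
      by (rule LIMSEQ_imp_Suc)
  qed
qed

end


definition pmin :: "(real \<Rightarrow> ereal) \<Rightarrow> real \<Rightarrow> real \<Rightarrow> real \<Rightarrow> bool" where
  "pmin g L p y \<longleftrightarrow> (\<forall>v. ereal (L / 2 * y\<^sup>2 - p * y) + g y \<le> ereal (L / 2 * v\<^sup>2 - p * v) + g v)"

lemma ev_right0:
  assumes "eventually P (at_right (0::real))"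
  shows "\<exists>\<eta>>0. \<forall>y. 0 < y \<and> y < \<eta> \<longrightarrow> P y"
  using assms unfolding eventually_at_right_field by auto

context setting begin

lemma pmin_fin:
  assumes "pmin g L p y" shows "g y = ereal (real_of_ereal (g y))"
proof -
  have "ereal (L / 2 * y\<^sup>2 - p * y) + g y \<le> ereal (L / 2 * 0\<^sup>2 - p * 0) + g 0"
    using assms unfolding pmin_def by blast
  then have "g y \<noteq> \<infinity>" using g0 by auto
  moreover have "g y \<noteq> -\<infinity>" using g_nonneg[of y] by auto
  ultimately show ?thesis by (cases "g y") auto
qed

lemma pmin_real:
  assumes "pmin g L p y" "g v = ereal G"
  shows "L / 2 * y\<^sup>2 - p * y + real_of_ereal (g y) \<le> L / 2 * v\<^sup>2 - p * v + G"
proof -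
  have "ereal (L / 2 * y\<^sup>2 - p * y) + g y \<le> ereal (L / 2 * v\<^sup>2 - p * v) + g v"
    using assms(1) unfolding pmin_def by blast
  then have "ereal (L / 2 * y\<^sup>2 - p * y) + ereal (real_of_ereal (g y)) \<le> ereal (L / 2 * v\<^sup>2 - p * v) + ereal G"
    using pmin_fin[OF assms(1)] assms(2) by metis
  then show ?thesis by simp
qed

lemma pmin_neg: "pmin g L p y \<Longrightarrow> pmin g L (-p) (-y)"
  unfolding pmin_def
proof
  fix v assume a: "\<forall>v. ereal (L / 2 * y\<^sup>2 - p * y) + g y \<le> ereal (L / 2 * v\<^sup>2 - p * v) + g v"
  have "ereal (L / 2 * y\<^sup>2 - p * y) + g y \<le> ereal (L / 2 * (-v)\<^sup>2 - p * (-v)) + g (-v)" using a by blast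
  then show "ereal (L / 2 * (- y)\<^sup>2 - - p * - y) + g (- y) \<le> ereal (L / 2 * v\<^sup>2 - - p * v) + g v"
    by (simp add: g_sym)
qed

lemma gap_B3c:
  assumes "B3c g"
  shows "\<exists>\<delta>>0. \<forall>p y. pmin g L p y \<and> 0 < y \<longrightarrow> \<delta> \<le> y"
proof -
  obtain c where c0: "0 < c" and cl: "ereal c < Liminf (at_right 0) g"
    using assms ereal_dense2[of 0 "Liminf (at_right 0) g"] unfolding B3c_def by auto
  obtain \<eta> where \<eta>: "\<eta> > 0" and g\<eta>: "\<And>y. 0 < y \<Longrightarrow> y < \<eta> \<Longrightarrow> g y > ereal c"
    using ev_right0[OF less_LiminfD[OF cl]] by blast
  obtain u where u: "u \<noteq> 0" "g u < \<infinity>" using B unfolding assumption_B_def by blast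
  define v0 where "v0 = \<bar>u\<bar>"
  have v0: "0 < v0" "g v0 < \<infinity>" using u g_sym[of u] by (auto simp: v0_def abs_if)
  define G0 where "G0 = real_of_ereal (g v0)"
  have gv0: "g v0 = ereal G0" using v0(2) g_nonneg[of v0] unfolding G0_def by (cases "g v0") auto
  have G0: "0 \<le> G0" using g_nonneg[of v0] gv0 by simp
  define M where "M = (L * v0\<^sup>2 + 2 * G0) / v0 + 1"
  have "0 \<le> (L * v0\<^sup>2 + 2 * G0) / v0" using v0 G0 L_pos by (intro divide_nonneg_pos add_nonneg_nonneg) auto
  then have Mp: "M > 0" by (simp add: M_def)
  define \<delta> where "\<delta> = min \<eta> (min (v0 / 2) (c / M))"
  have dp: "\<delta> > 0" using \<eta> v0 c0 Mp by (simp add: \<delta>_def)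
  have "\<delta> \<le> y" if pm: "pmin g L p y" and y: "0 < y" for p y
  proof (rule ccontr)
    assume "\<not> \<delta> \<le> y"
    then have yd: "y < \<eta>" "y \<le> v0 / 2" "y < c / M" by (auto simp: \<delta>_def)
    define Y where "Y = real_of_ereal (g y)"
    have gy: "g y = ereal Y" using pmin_fin[OF pm] unfolding Y_def .
    have cY: "c < Y" using g\<eta>[OF y yd(1)] gy by simp
    have i0: "L / 2 * y\<^sup>2 - p * y + Y \<le> L / 2 * 0\<^sup>2 - p * 0 + 0"
      using pmin_real[OF pm, of 0 0] g0 unfolding Y_def by (simp add: zero_ereal_def)
    have i1: "L / 2 * y\<^sup>2 - p * y + Y \<le> L / 2 * v0\<^sup>2 - p * v0 + G0"
      using pmin_real[OF pm gv0] unfolding Y_def .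
    have Ly: "0 \<le> L / 2 * y\<^sup>2" using L_pos by simp
    have py: "c < p * y" using i0 cY Ly by simp
    have pp: "0 < p"
    proof (rule ccontr)
      assume "\<not> 0 < p"
      then have "p * y \<le> 0" using y by (simp add: mult_nonpos_nonneg)
      with py c0 show False by simp
    qed
    have "p * (v0 - y) = p * v0 - p * y" by (simp add: right_diff_distrib)
    then have "p * (v0 - y) \<le> L / 2 * v0\<^sup>2 + G0"
      using i1 cY c0 Ly by linarith
    moreover have "p * (v0 / 2) \<le> p * (v0 - y)" using yd pp by (intro mult_left_mono) auto
    ultimately have "p * v0 \<le> L * v0\<^sup>2 + 2 * G0" by simp
    then have "p \<le> (L * v0\<^sup>2 + 2 * G0) / v0" using v0 by (simp add: pos_le_divide_eq mult.commute)
    then have "p < M" by (simp add: M_def)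
    then have "p * y < M * y" using y by simp
    with py have "c < M * y" by simp
    then have "c / M < y" using Mp by (simp add: pos_divide_less_eq mult.commute)
    with yd show False by simp
  qed
  then show ?thesis using dp by blast
qed

lemma gap_second_order:
  assumes \<eta>: "\<eta> > 0"
    and H: "\<And>u. 0 < u \<Longrightarrow> u < \<eta> \<Longrightarrow> g u \<noteq> \<infinity> \<and> g u \<noteq> -\<infinity> \<and>
      (\<lambda>v. real_of_ereal (g v)) differentiable (at u) \<and>
      deriv (\<lambda>v. real_of_ereal (g v)) differentiable (at u) \<and> g2 g u < - L"
    and pm: "pmin g L p y" and y: "0 < y"
  shows "\<eta> \<le> y"
proof (rule ccontr)
  assume "\<not> \<eta> \<le> y"
  then have y\<eta>: "y < \<eta>" by simp
  define G where "G = (\<lambda>v. real_of_ereal (g v))"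
  define h where "h = (\<lambda>v. L / 2 * v\<^sup>2 - p * v + G v)"
  define h' where "h' = (\<lambda>v. L * v - p + deriv G v)"
  have gfin: "g v = ereal (G v)" if "0 < v" "v < \<eta>" for v
    using H[OF that] unfolding G_def by (cases "g v") auto
  have hmin: "h y \<le> h v" if "0 < v" "v < \<eta>" for v
    using pmin_real[OF pm gfin[OF that]] unfolding h_def G_def by simp
  have dh: "DERIV h v :> h' v" if "0 < v" "v < \<eta>" for v
  proof -
    have "DERIV G v :> deriv G v"
      using H[OF that] unfolding G_def by (simp add: DERIV_deriv_iff_real_differentiable)
    then show ?thesis unfolding h_def h'_def
      by (auto intro!: derivative_eq_intros simp: power2_eq_square)
  qed
  have dh': "DERIV h' y :> L + g2 g y"
  proof -
    have "DERIV (deriv G) y :> g2 g y"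
      using H[OF y y\<eta>] unfolding G_def g2_def by (simp add: DERIV_deriv_iff_real_differentiable)
    then show ?thesis unfolding h'_def by (auto intro!: derivative_eq_intros)
  qed
  have neg: "L + g2 g y < 0" using H[OF y y\<eta>] by simp
  have h'y: "h' y = 0"
  proof (rule DERIV_local_min[OF dh[OF y y\<eta>]])
    show "0 < min y (\<eta> - y)" using y y\<eta> by simp
    show "\<forall>z. \<bar>y - z\<bar> < min y (\<eta> - y) \<longrightarrow> h y \<le> h z"
      by (intro allI impI hmin) (auto simp: abs_if split: if_splits)
  qed
  obtain d where d: "d > 0" and dd: "\<And>s. s > 0 \<Longrightarrow> s < d \<Longrightarrow> h' (y + s) < h' y"
    using DERIV_neg_dec_right[OF dh' neg] by blast
  define m where "m = min d (\<eta> - y)"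
  define b where "b = y + m / 2"
  have m1: "m \<le> \<eta> - y" "m \<le> d" "0 < m" using d y\<eta> by (auto simp: m_def)
  have yb: "y < b" using m1 unfolding b_def by linarith
  have b\<eta>: "b < \<eta>" using m1 unfolding b_def by linarith
  have bd: "b - y < d" using m1 unfolding b_def by linarith
  have cont: "continuous_on {y..b} h"
  proof (rule continuous_at_imp_continuous_on, intro ballI)
    fix x assume "x \<in> {y..b}"
    then have "0 < x" "x < \<eta>" using y b\<eta> by auto
    then show "isCont h x" by (rule DERIV_isCont[OF dh])
  qed
  have "h b < h y"
  proof (rule DERIV_neg_imp_decreasing_open[OF yb _ cont])
    fix x assume x: "y < x" "x < b"
    have "h' (y + (x - y)) < h' y" using x bd by (intro dd) auto
    then have "h' x < 0" using h'y by simp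
    moreover have "DERIV h x :> h' x" using x y b\<eta> by (intro dh) auto
    ultimately show "\<exists>l. DERIV h x :> l \<and> l < 0" by blast
  qed
  moreover have "h y \<le> h b" using hmin yb y b\<eta> by simp
  ultimately show False by simp
qed

lemma gap_pos: "\<exists>\<delta>>0. \<forall>p y. pmin g L p y \<and> 0 < y \<longrightarrow> \<delta> \<le> y"
proof (cases "B3c g")
  case True
  then show ?thesis by (rule gap_B3c)
next
  case nc: False
  have "eventually (\<lambda>u. g2 g u < - L) (at_right 0)"
  proof (cases "B3b g")
    case True
    then have "((\<lambda>u. ereal (g2 g u)) \<longlongrightarrow> -\<infinity>) (at_right 0)" by (simp add: B3b_def)
    then have "eventually (\<lambda>u. ereal (g2 g u) < ereal (-L)) (at_right 0)"
      unfolding tendsto_MInfty by blast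
    then show ?thesis by simp
  next
    case False
    with nc B have a: "B3a g" unfolding assumption_B_def by blast
    define l where "l = Limsup (at_right 0) (\<lambda>u. ereal (g2 g u))"
    have lr: "l \<in> {-\<infinity><..<0}" using a by (simp add: B3a_def l_def)
    then obtain r where r: "l = ereal r" "r < 0" by (cases l) auto
    have "s0 g = - 1 / r" using nc False r by (simp add: s0_def l_def)
    then have "- 1 / r < 1 / L" using s0L by simp
    then have "inverse (- r) < inverse L" by (simp add: inverse_eq_divide)
    then have "L < - r" using r(2) L_pos inverse_less_iff_less[of "-r" L] by simp
    then have "l < ereal (-L)" using r by simp
    then have "eventually (\<lambda>u. ereal (g2 g u) < ereal (-L)) (at_right 0)"
      unfolding l_def by (rule Limsup_lessD)
    then show ?thesis by simp
  qed
  moreover have td: "twice_diff_near0 g"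
    using nc B unfolding assumption_B_def B3a_def B3b_def by blast
  then obtain \<epsilon> where \<epsilon>: "\<epsilon> > 0" and H1: "\<forall>u \<in> {0<..<\<epsilon>}. g u \<noteq> \<infinity> \<and> g u \<noteq> -\<infinity> \<and>
      (\<lambda>v. real_of_ereal (g v)) differentiable (at u) \<and>
      deriv (\<lambda>v. real_of_ereal (g v)) differentiable (at u)"
    unfolding twice_diff_near0_def by blast
  ultimately obtain \<eta>1 where \<eta>1: "\<eta>1 > 0" and H2: "\<And>u. 0 < u \<Longrightarrow> u < \<eta>1 \<Longrightarrow> g2 g u < - L"
    using ev_right0 by blast
  define \<eta> where "\<eta> = min \<epsilon> \<eta>1"
  have "\<eta> > 0" using \<epsilon> \<eta>1 by (simp add: \<eta>_def)
  moreover have "\<forall>p y. pmin g L p y \<and> 0 < y \<longrightarrow> \<eta> \<le> y"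
  proof (intro allI impI)
    fix p y assume "pmin g L p y \<and> 0 < y"
    then show "\<eta> \<le> y"
      by (intro gap_second_order[OF \<open>\<eta> > 0\<close>]) (use H1 H2 in \<open>auto simp: \<eta>_def\<close>)
  qed
  ultimately show ?thesis by blast
qed

lemma gap: "\<exists>\<delta>>0. \<forall>p y. pmin g L p y \<and> y \<noteq> 0 \<longrightarrow> \<delta> \<le> \<bar>y\<bar>"
proof -
  obtain \<delta> where d: "\<delta> > 0" "\<forall>p y. pmin g L p y \<and> 0 < y \<longrightarrow> \<delta> \<le> y" using gap_pos by blast
  have "\<delta> \<le> \<bar>y\<bar>" if "pmin g L p y" "y \<noteq> 0" for p y
  proof (cases "y > 0")
    case True then show ?thesis using d that by auto
  next
    case False
    then have "0 < - y" using that by simp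
    then show ?thesis using d pmin_neg[OF that(1)] False by fastforce
  qed
  then show ?thesis using d by blast
qed

end


lemma finM:
  assumes "\<Omega> \<in> sets lebesgue" "emeasure lebesgue \<Omega> < \<infinity>"
  shows "finite_measure (lebesgue_on \<Omega>)"
  using assms by (intro finite_measure_lebesgue_on fmeasurableI)

lemma indicator_L2:
  assumes "\<Omega> \<in> sets lebesgue" "emeasure lebesgue \<Omega> < \<infinity>" "A \<in> sets (lebesgue_on \<Omega>)"
  shows "(indicator A :: 'a::euclidean_space \<Rightarrow> real) \<in> L2 \<Omega>"
proof -
  interpret finite_measure "lebesgue_on \<Omega>" by (rule finM[OF assms(1,2)])
  have "integrable (lebesgue_on \<Omega>) (indicator A :: 'a \<Rightarrow> real)"
    using assms(3) by (intro integrable_real_indicator) (auto simp: less_top[symmetric])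
  moreover have "(\<lambda>x. (indicator A x :: real)\<^sup>2) = indicator A"
    by (auto simp: indicator_def)
  ultimately show ?thesis using assms(3) by (simp add: L2_def)
qed

lemma weak_ae_upper:
  fixes v :: "nat \<Rightarrow> 'a::euclidean_space \<Rightarrow> real"
  assumes \<Omega>: "\<Omega> \<in> sets lebesgue" "emeasure lebesgue \<Omega> < \<infinity>"
    and wc: "weak_conv_L2 \<Omega> v w" and e: "e > 0"
  shows "AE x in lebesgue_on \<Omega>. \<exists>n\<ge>N. v n x < w x + e"
proof -
  interpret finite_measure "lebesgue_on \<Omega>" by (rule finM[OF \<Omega>])
  have vL2: "\<And>n. v n \<in> L2 \<Omega>" and wL2: "w \<in> L2 \<Omega>"
    and lim: "\<And>h. h \<in> L2 \<Omega> \<Longrightarrow> (\<lambda>k. L2_inner \<Omega> (v k) h) \<longlonglongrightarrow> L2_inner \<Omega> w h"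
    using wc unfolding weak_conv_L2_def by auto
  have vm[measurable]: "\<And>n. v n \<in> borel_measurable (lebesgue_on \<Omega>)" using vL2 by (simp add: L2_def)
  have wm[measurable]: "w \<in> borel_measurable (lebesgue_on \<Omega>)" using wL2 by (simp add: L2_def)
  define A where "A = {x \<in> space (lebesgue_on \<Omega>). \<forall>n. N \<le> n \<longrightarrow> w x + e \<le> v n x}"
  have Am: "A \<in> sets (lebesgue_on \<Omega>)" unfolding A_def by measurable
  define h where "h = (indicator A :: 'a \<Rightarrow> real)"
  have hL2: "h \<in> L2 \<Omega>" unfolding h_def by (rule indicator_L2[OF \<Omega> Am])
  have iwh: "integrable (lebesgue_on \<Omega>) (\<lambda>x. w x * h x)" by (rule L2_mult_integrable[OF wL2 hL2])
  have ih: "integrable (lebesgue_on \<Omega>) h" using Am unfolding h_def by (intro integrable_real_indicator) (auto simp: less_top[symmetric])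
  have ge: "L2_inner \<Omega> w h + e * measure (lebesgue_on \<Omega>) A \<le> L2_inner \<Omega> (v n) h" if n: "N \<le> n" for n
  proof -
    have "L2_inner \<Omega> w h + e * measure (lebesgue_on \<Omega>) A = (\<integral>x. w x * h x + e * h x \<partial>lebesgue_on \<Omega>)"
    proof -
      have "A \<inter> \<Omega> = A" using sets.sets_into_space[OF Am] by auto
      then show ?thesis using iwh ih Am by (simp add: L2_inner_def h_def)
    qed
    also have "\<dots> \<le> (\<integral>x. v n x * h x \<partial>lebesgue_on \<Omega>)"
    proof (rule integral_mono)
      show "integrable (lebesgue_on \<Omega>) (\<lambda>x. w x * h x + e * h x)" using iwh ih by simp
      show "integrable (lebesgue_on \<Omega>) (\<lambda>x. v n x * h x)" by (rule L2_mult_integrable[OF vL2 hL2])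
      fix x assume "x \<in> space (lebesgue_on \<Omega>)"
      show "w x * h x + e * h x \<le> v n x * h x"
        using n by (auto simp: h_def A_def indicator_def algebra_simps)
    qed
    finally show ?thesis by (simp add: L2_inner_def)
  qed
  have "L2_inner \<Omega> w h + e * measure (lebesgue_on \<Omega>) A \<le> L2_inner \<Omega> w h"
    by (rule LIMSEQ_le_const[OF lim[OF hL2]]) (use ge in blast)
  then have "measure (lebesgue_on \<Omega>) A \<le> 0" using e by (simp add: mult_le_0_iff)
  then have "emeasure (lebesgue_on \<Omega>) A = 0" using Am by (simp add: emeasure_eq_measure measure_nonneg antisym)
  then have "A \<in> null_sets (lebesgue_on \<Omega>)" using Am by blast
  then show ?thesis
    by (rule AE_I') (auto simp: A_def not_less)
qed

lemma weak_conv_neg: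
  assumes "weak_conv_L2 \<Omega> v w"
  shows "weak_conv_L2 \<Omega> (\<lambda>n x. - v n x) (\<lambda>x. - w x)"
proof -
  have vL2: "\<And>n. v n \<in> L2 \<Omega>" and wL2: "w \<in> L2 \<Omega>"
    and lim: "\<And>h. h \<in> L2 \<Omega> \<Longrightarrow> (\<lambda>k. L2_inner \<Omega> (v k) h) \<longlonglongrightarrow> L2_inner \<Omega> w h"
    using assms unfolding weak_conv_L2_def by auto
  have neg: "\<And>u. u \<in> L2 \<Omega> \<Longrightarrow> (\<lambda>x. - u x) \<in> L2 \<Omega>"
    using L2_lin[of _ \<Omega> _ "-1" 0] by fastforce
  have ip: "L2_inner \<Omega> (\<lambda>x. - u x) h = - L2_inner \<Omega> u h" for u h
    using L2_inner_scale[of \<Omega> h "-1" u] by (simp add: L2_inner_sym)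
  show ?thesis unfolding weak_conv_L2_def
    using vL2 wL2 neg lim by (simp add: ip tendsto_minus)
qed

lemma weak_ae:
  fixes v :: "nat \<Rightarrow> 'a::euclidean_space \<Rightarrow> real"
  assumes \<Omega>: "\<Omega> \<in> sets lebesgue" "emeasure lebesgue \<Omega> < \<infinity>"
    and wc: "weak_conv_L2 \<Omega> v w"
  shows "AE x in lebesgue_on \<Omega>. \<forall>e>0. \<forall>N. (\<exists>n\<ge>N. v n x < w x + e) \<and> (\<exists>n\<ge>N. w x - e < v n x)"
proof -
  have "AE x in lebesgue_on \<Omega>. \<forall>j::nat. \<forall>N::nat. (\<exists>n\<ge>N. v n x < w x + 1 / Suc j) \<and> (\<exists>n\<ge>N. w x - 1 / Suc j < v n x)"
  proof (subst AE_all_countable, intro allI, subst AE_all_countable, intro allI)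
    fix j N :: nat
    have e: "(0::real) < 1 / Suc j" by simp
    have "AE x in lebesgue_on \<Omega>. \<exists>n\<ge>N. v n x < w x + 1 / Suc j" by (rule weak_ae_upper[OF \<Omega> wc e])
    moreover have "AE x in lebesgue_on \<Omega>. \<exists>n\<ge>N. - v n x < - w x + 1 / Suc j"
      by (rule weak_ae_upper[OF \<Omega> weak_conv_neg[OF wc] e])
    ultimately show "AE x in lebesgue_on \<Omega>. (\<exists>n\<ge>N. v n x < w x + 1 / Suc j) \<and> (\<exists>n\<ge>N. w x - 1 / Suc j < v n x)"
      by eventually_elim auto
  qed
  then show ?thesis
  proof (rule AE_mp, intro AE_I2 impI allI)
    fix x and e :: real and N
    assume a: "\<forall>j::nat. \<forall>N::nat. (\<exists>n\<ge>N. v n x < w x + 1 / Suc j) \<and> (\<exists>n\<ge>N. w x - 1 / Suc j < v n x)"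
      and e: "e > 0"
    obtain j :: nat where j: "1 / Suc j < e" using e by (metis nat_approx_posE)
    from a have b: "(\<exists>n\<ge>N. v n x < w x + 1 / Suc j) \<and> (\<exists>n\<ge>N. w x - 1 / Suc j < v n x)" by blast
    then obtain n1 n2 where n: "n1 \<ge> N" "v n1 x < w x + 1 / Suc j" "n2 \<ge> N" "w x - 1 / Suc j < v n2 x" by blast
    have "v n1 x < w x + e" "w x - e < v n2 x" using n j by linarith+
    then show "(\<exists>n\<ge>N. v n x < w x + e) \<and> (\<exists>n\<ge>N. w x - e < v n x)" using n by blast
  qed
qed

context setting begin

lemma g_open: "open {x. y < g x}"
  unfolding open_dist
proof (intro ballI)
  fix x assume "x \<in> {x. y < g x}"
  then have "y < g x" by simp
  also have "g x \<le> Liminf (at x) g" using B unfolding assumption_B_def lsc_ereal_def by blast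
  finally have "eventually (\<lambda>z. y < g z) (at x)" by (rule less_LiminfD)
  then obtain d where d: "d > 0" "\<And>z. z \<noteq> x \<Longrightarrow> dist z x < d \<Longrightarrow> y < g z"
    unfolding eventually_at by auto
  show "\<exists>e>0. \<forall>z. dist z x < e \<longrightarrow> z \<in> {x. y < g x}"
  proof (intro exI[of _ d] conjI allI impI)
    fix z assume "dist z x < d"
    then show "z \<in> {x. y < g x}" using d \<open>y < g x\<close> by (cases "z = x") auto
  qed (use d in auto)
qed

lemma g_meas[measurable]: "g \<in> borel_measurable borel"
  by (rule borel_measurableI_greater) (use g_open in auto)

end


context setting begin

lemma G_int_real:
  assumes um: "u \<in> borel_measurable (lebesgue_on \<Omega>)" and fin: "G_int \<Omega> g u < \<infinity>"
  shows "AE x in lebesgue_on \<Omega>. g (u x) = ereal (real_of_ereal (g (u x)))"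
    and "integrable (lebesgue_on \<Omega>) (\<lambda>x. real_of_ereal (g (u x)))"
    and "G_int \<Omega> g u = ereal (\<integral>x. real_of_ereal (g (u x)) \<partial>lebesgue_on \<Omega>)"
proof -
  have gm[measurable]: "(\<lambda>x. g (u x)) \<in> borel_measurable (lebesgue_on \<Omega>)"
    using um by measurable
  have fin': "(\<integral>\<^sup>+ x. e2ennreal (g (u x)) \<partial>lebesgue_on \<Omega>) \<noteq> \<infinity>"
    using fin by (simp add: G_int_def)
  have "AE x in lebesgue_on \<Omega>. e2ennreal (g (u x)) \<noteq> \<infinity>"
    by (rule nn_integral_PInf_AE[OF _ fin']) measurable
  then show ae: "AE x in lebesgue_on \<Omega>. g (u x) = ereal (real_of_ereal (g (u x)))"
  proof (rule AE_mp, intro AE_I2 impI)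
    fix x assume "e2ennreal (g (u x)) \<noteq> \<infinity>"
    then have "g (u x) \<noteq> \<infinity>" by auto
    moreover have "g (u x) \<noteq> -\<infinity>" using g_nonneg[of "u x"] by auto
    ultimately show "g (u x) = ereal (real_of_ereal (g (u x)))" by (cases "g (u x)") auto
  qed
  have eq: "(\<integral>\<^sup>+ x. e2ennreal (g (u x)) \<partial>lebesgue_on \<Omega>) = (\<integral>\<^sup>+ x. ennreal (real_of_ereal (g (u x))) \<partial>lebesgue_on \<Omega>)"
    by (rule nn_integral_cong_AE) (use ae in \<open>eventually_elim, metis e2ennreal_ereal\<close>)
  have nn: "AE x in lebesgue_on \<Omega>. 0 \<le> real_of_ereal (g (u x))"
    by (intro AE_I2 real_of_ereal_pos g_nonneg)
  show int: "integrable (lebesgue_on \<Omega>) (\<lambda>x. real_of_ereal (g (u x)))"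
    by (rule integrableI_nonneg[OF _ nn]) (use fin' eq in \<open>auto simp: less_top\<close>)
  have "(\<integral>\<^sup>+ x. ennreal (real_of_ereal (g (u x))) \<partial>lebesgue_on \<Omega>) = ennreal (\<integral>x. real_of_ereal (g (u x)) \<partial>lebesgue_on \<Omega>)"
    by (rule nn_integral_eq_integral[OF int nn])
  then show "G_int \<Omega> g u = ereal (\<integral>x. real_of_ereal (g (u x)) \<partial>lebesgue_on \<Omega>)"
    unfolding G_int_def eq using integral_nonneg_AE[OF nn] by simp
qed

lemma prox_model_eq:
  assumes b: "b \<in> L2 \<Omega>" and u: "u \<in> L2 \<Omega>"
  shows "prox_model \<Omega> f gradf g L b u =
    ereal (f b + (\<integral>x. L / 2 * (b x)\<^sup>2 - gradf b x * b x \<partial>lebesgue_on \<Omega>)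
               + (\<integral>x. L / 2 * (u x)\<^sup>2 - (L * b x - gradf b x) * u x \<partial>lebesgue_on \<Omega>)) + G_int \<Omega> g u"
proof -
  define a where "a = gradf b"
  have a: "a \<in> L2 \<Omega>" unfolding a_def by (rule grad_L2[OF b])
  have ub: "(\<lambda>x. u x - b x) \<in> L2 \<Omega>" by (rule L2_diff[OF b u])
  have i1: "integrable (lebesgue_on \<Omega>) (\<lambda>x. a x * (u x - b x))" by (rule L2_mult_integrable[OF a ub])
  have i2: "integrable (lebesgue_on \<Omega>) (\<lambda>x. (u x - b x) * (u x - b x))" by (rule L2_mult_integrable[OF ub ub])
  have ib2: "integrable (lebesgue_on \<Omega>) (\<lambda>x. (b x)\<^sup>2)" using b by (simp add: L2_def)
  have iu2: "integrable (lebesgue_on \<Omega>) (\<lambda>x. (u x)\<^sup>2)" using u by (simp add: L2_def)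
  have iab: "integrable (lebesgue_on \<Omega>) (\<lambda>x. a x * b x)" by (rule L2_mult_integrable[OF a b])
  have lba: "(\<lambda>x. L * b x + (-1) * a x) \<in> L2 \<Omega>" by (rule L2_lin[OF b a])
  have ilu: "integrable (lebesgue_on \<Omega>) (\<lambda>x. (L * b x + (-1) * a x) * u x)" by (rule L2_mult_integrable[OF lba u])
  have ic: "integrable (lebesgue_on \<Omega>) (\<lambda>x. L / 2 * (b x)\<^sup>2 - a x * b x)"
    using ib2 iab by simp
  have iP: "integrable (lebesgue_on \<Omega>) (\<lambda>x. L / 2 * (u x)\<^sup>2 - (L * b x - a x) * u x)"
    using iu2 ilu by simp
  have "L2_inner \<Omega> a (\<lambda>x. u x - b x) + L / 2 * (L2_norm \<Omega> (\<lambda>x. u x - b x))\<^sup>2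
      = (\<integral>x. a x * (u x - b x) \<partial>lebesgue_on \<Omega>) + L / 2 * (\<integral>x. (u x - b x) * (u x - b x) \<partial>lebesgue_on \<Omega>)"
    by (simp add: L2_norm_sq L2_inner_def)
  also have "\<dots> = (\<integral>x. a x * (u x - b x) + L / 2 * ((u x - b x) * (u x - b x)) \<partial>lebesgue_on \<Omega>)"
    using i1 i2 by simp
  also have "\<dots> = (\<integral>x. (L / 2 * (b x)\<^sup>2 - a x * b x) + (L / 2 * (u x)\<^sup>2 - (L * b x - a x) * u x) \<partial>lebesgue_on \<Omega>)"
    by (rule Bochner_Integration.integral_cong) (simp_all add: algebra_simps power2_eq_square)
  also have "\<dots> = (\<integral>x. L / 2 * (b x)\<^sup>2 - a x * b x \<partial>lebesgue_on \<Omega>) + (\<integral>x. L / 2 * (u x)\<^sup>2 - (L * b x - a x) * u x \<partial>lebesgue_on \<Omega>)"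
    by (rule Bochner_Integration.integral_add[OF ic iP])
  finally show ?thesis unfolding prox_model_def a_def by (simp add: add.assoc)
qed

definition Phi :: "nat \<Rightarrow> 'a \<Rightarrow> real \<Rightarrow> real" where
  "Phi k x z = L / 2 * z\<^sup>2 - (L * uu k x - gradf (uu k) x) * z"

lemma Phi_integrable: "u \<in> L2 \<Omega> \<Longrightarrow> integrable (lebesgue_on \<Omega>) (\<lambda>x. Phi k x (u x))"
proof -
  assume u: "u \<in> L2 \<Omega>"
  have iu2: "integrable (lebesgue_on \<Omega>) (\<lambda>x. (u x)\<^sup>2)" using u by (simp add: L2_def)
  have lba: "(\<lambda>x. L * uu k x + (-1) * gradf (uu k) x) \<in> L2 \<Omega>" by (rule L2_lin[OF uu_L2 grad_L2[OF uu_L2]])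
  have ilu: "integrable (lebesgue_on \<Omega>) (\<lambda>x. (L * uu k x + (-1) * gradf (uu k) x) * u x)" by (rule L2_mult_integrable[OF lba u])
  show ?thesis using iu2 ilu by (simp add: Phi_def)
qed

lemma prox_model_Phi:
  assumes u: "u \<in> L2 \<Omega>"
  shows "prox_model \<Omega> f gradf g L (uu k) u =
    ereal (f (uu k) + (\<integral>x. L / 2 * (uu k x)\<^sup>2 - gradf (uu k) x * uu k x \<partial>lebesgue_on \<Omega>)
               + (\<integral>x. Phi k x (u x) \<partial>lebesgue_on \<Omega>)) + G_int \<Omega> g u"
  unfolding prox_model_eq[OF uu_L2 u] Phi_def ..

lemma uu_meas[measurable]: "uu k \<in> borel_measurable (lebesgue_on \<Omega>)"
  using uu_L2 by (simp add: L2_def)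

lemma grad_meas[measurable]: "gradf (uu k) \<in> borel_measurable (lebesgue_on \<Omega>)"
  using grad_L2[OF uu_L2] by (simp add: L2_def)

lemma prox_pointwise_w:
  "AE x in lebesgue_on \<Omega>. ereal (Phi k x (uu (Suc k) x)) + g (uu (Suc k) x) \<le> ereal (Phi k x w) + g w"
proof (cases "g w = \<infinity>")
  case True
  then show ?thesis by (intro AE_I2) simp
next
  case False
  interpret finite_measure "lebesgue_on \<Omega>" by (rule finM[OF \<Omega>l \<Omega>fin])
  define gw where "gw = real_of_ereal (g w)"
  have gw: "g w = ereal gw" using False g_nonneg[of w] unfolding gw_def by (cases "g w") auto
  have gw0: "0 \<le> gw" using g_nonneg[of w] gw by simp
  define y where "y = uu (Suc k)"
  have yL2: "y \<in> L2 \<Omega>" unfolding y_def by (rule uu_L2)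
  have ym[measurable]: "y \<in> borel_measurable (lebesgue_on \<Omega>)" unfolding y_def by measurable
  define \<Gamma> where "\<Gamma> = (\<lambda>x. real_of_ereal (g (y x)))"
  have Gfin: "G_int \<Omega> g y < \<infinity>" unfolding y_def by (rule G_int_fin)
  note GR = G_int_real[OF ym Gfin]
  have aeG: "AE x in lebesgue_on \<Omega>. g (y x) = ereal (\<Gamma> x)" using GR(1) unfolding \<Gamma>_def .
  have iG: "integrable (lebesgue_on \<Omega>) \<Gamma>" using GR(2) unfolding \<Gamma>_def .
  have Gy: "G_int \<Omega> g y = ereal (integral\<^sup>L (lebesgue_on \<Omega>) \<Gamma>)" using GR(3) unfolding \<Gamma>_def .
  have \<Gamma>m[measurable]: "\<Gamma> \<in> borel_measurable (lebesgue_on \<Omega>)" unfolding \<Gamma>_def by measurable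
  have Phim[measurable]: "(\<lambda>x. Phi k x (y x)) \<in> borel_measurable (lebesgue_on \<Omega>)"
    "(\<lambda>x. Phi k x w) \<in> borel_measurable (lebesgue_on \<Omega>)" unfolding Phi_def by measurable
  define A where "A = {x \<in> space (lebesgue_on \<Omega>). Phi k x w + gw < Phi k x (y x) + \<Gamma> x}"
  have Am[measurable]: "A \<in> sets (lebesgue_on \<Omega>)" unfolding A_def by measurable
  define v where "v = (\<lambda>x. if x \<in> A then w else y x)"
  have vm[measurable]: "v \<in> borel_measurable (lebesgue_on \<Omega>)" unfolding v_def by measurable
  have vL2: "v \<in> L2 \<Omega>"
  proof -
    have iy2: "integrable (lebesgue_on \<Omega>) (\<lambda>x. (y x)\<^sup>2)" using yL2 by (simp add: L2_def)
    have i: "integrable (lebesgue_on \<Omega>) (\<lambda>x. w\<^sup>2 + (y x)\<^sup>2)" using iy2 by simp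
    have m2: "(\<lambda>x. (v x)\<^sup>2) \<in> borel_measurable (lebesgue_on \<Omega>)" by measurable
    have b: "\<And>x. norm ((v x)\<^sup>2) \<le> norm (w\<^sup>2 + (y x)\<^sup>2)" by (simp add: v_def)
    have "integrable (lebesgue_on \<Omega>) (\<lambda>x. (v x)\<^sup>2)"
      by (rule Bochner_Integration.integrable_bound[OF i m2 AE_I2[OF b]])
    then show ?thesis using vm by (simp add: L2_def)
  qed
  have Gvfin: "G_int \<Omega> g v < \<infinity>"
  proof -
    have "(\<integral>\<^sup>+ x. e2ennreal (g (v x)) \<partial>lebesgue_on \<Omega>) \<le> (\<integral>\<^sup>+ x. e2ennreal (g (y x)) + ennreal gw \<partial>lebesgue_on \<Omega>)"
      by (intro nn_integral_mono) (auto simp: v_def gw)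
    also have "\<dots> = (\<integral>\<^sup>+ x. e2ennreal (g (y x)) \<partial>lebesgue_on \<Omega>) + (\<integral>\<^sup>+ x. ennreal gw \<partial>lebesgue_on \<Omega>)"
      by (rule nn_integral_add) measurable
    also have "\<dots> < \<infinity>"
    proof -
      have "(\<integral>\<^sup>+ x. e2ennreal (g (y x)) \<partial>lebesgue_on \<Omega>) < \<infinity>" using Gfin by (simp add: G_int_def less_top)
      moreover have "(\<integral>\<^sup>+ x. ennreal gw \<partial>lebesgue_on \<Omega>) < \<infinity>"
        using emeasure_finite[of \<Omega>] by (simp add: ennreal_mult_eq_top_iff less_top[symmetric])
      ultimately show ?thesis by (simp add: less_top)
    qed
    finally show ?thesis by (simp add: G_int_def)
  qed
  note GV = G_int_real[OF vm Gvfin]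
  define \<Gamma>v where "\<Gamma>v = (\<lambda>x. real_of_ereal (g (v x)))"
  have \<Gamma>v: "\<Gamma>v = (\<lambda>x. if x \<in> A then gw else \<Gamma> x)" unfolding \<Gamma>v_def v_def \<Gamma>_def gw_def by auto
  have iGv: "integrable (lebesgue_on \<Omega>) \<Gamma>v" using GV(2) unfolding \<Gamma>v_def .
  have Gv: "G_int \<Omega> g v = ereal (integral\<^sup>L (lebesgue_on \<Omega>) \<Gamma>v)" using GV(3) unfolding \<Gamma>v_def .
  have iPy: "integrable (lebesgue_on \<Omega>) (\<lambda>x. Phi k x (y x))" by (rule Phi_integrable[OF yL2])
  have iPv: "integrable (lebesgue_on \<Omega>) (\<lambda>x. Phi k x (v x))" by (rule Phi_integrable[OF vL2])
  have "prox_model \<Omega> f gradf g L (uu k) y \<le> prox_model \<Omega> f gradf g L (uu k) v"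
    unfolding y_def by (rule uu_min[OF vL2[unfolded y_def]])
  then have "(\<integral>x. Phi k x (y x) \<partial>lebesgue_on \<Omega>) + integral\<^sup>L (lebesgue_on \<Omega>) \<Gamma>
      \<le> (\<integral>x. Phi k x (v x) \<partial>lebesgue_on \<Omega>) + integral\<^sup>L (lebesgue_on \<Omega>) \<Gamma>v"
    unfolding prox_model_Phi[OF yL2] prox_model_Phi[OF vL2] Gy Gv by simp
  then have "0 \<le> (\<integral>x. (Phi k x (v x) + \<Gamma>v x) - (Phi k x (y x) + \<Gamma> x) \<partial>lebesgue_on \<Omega>)"
    using iPy iPv iG iGv by simp
  also have "(\<integral>x. (Phi k x (v x) + \<Gamma>v x) - (Phi k x (y x) + \<Gamma> x) \<partial>lebesgue_on \<Omega>)
      = - (\<integral>x. indicator A x * ((Phi k x (y x) + \<Gamma> x) - (Phi k x w + gw)) \<partial>lebesgue_on \<Omega>)"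
    by (subst integral_minus[symmetric], rule Bochner_Integration.integral_cong)
       (auto simp: \<Gamma>v v_def indicator_def)
  finally have le0: "(\<integral>x. indicator A x * ((Phi k x (y x) + \<Gamma> x) - (Phi k x w + gw)) \<partial>lebesgue_on \<Omega>) \<le> 0" by simp
  have iD: "integrable (lebesgue_on \<Omega>) (\<lambda>x. indicator A x * ((Phi k x (y x) + \<Gamma> x) - (Phi k x w + gw)))"
  proof -
    have "integrable (lebesgue_on \<Omega>) (\<lambda>x. (Phi k x (v x) + \<Gamma>v x) - (Phi k x (y x) + \<Gamma> x))"
      using iPy iPv iG iGv by simp
    then have "integrable (lebesgue_on \<Omega>) (\<lambda>x. - ((Phi k x (v x) + \<Gamma>v x) - (Phi k x (y x) + \<Gamma> x)))"
      by (rule integrable_minus)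
    moreover have "(\<lambda>x. - ((Phi k x (v x) + \<Gamma>v x) - (Phi k x (y x) + \<Gamma> x)))
        = (\<lambda>x. indicator A x * ((Phi k x (y x) + \<Gamma> x) - (Phi k x w + gw)))"
      by (rule ext) (auto simp: \<Gamma>v v_def indicator_def)
    ultimately show ?thesis by simp
  qed
  have nonneg: "AE x in lebesgue_on \<Omega>. 0 \<le> indicator A x * ((Phi k x (y x) + \<Gamma> x) - (Phi k x w + gw))"
    by (intro AE_I2) (auto simp: A_def indicator_def)
  have "integral\<^sup>L (lebesgue_on \<Omega>) (\<lambda>x. indicator A x * ((Phi k x (y x) + \<Gamma> x) - (Phi k x w + gw))) = 0"
    using le0 integral_nonneg_AE[OF nonneg] by simp
  then have ae0: "AE x in lebesgue_on \<Omega>. indicator A x * ((Phi k x (y x) + \<Gamma> x) - (Phi k x w + gw)) = 0"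
    using integral_nonneg_eq_0_iff_AE[OF iD nonneg] by simp
  show ?thesis
    using ae0 aeG AE_space
  proof eventually_elim
    case (elim x)
    have "x \<notin> A" using elim(1) by (auto simp: A_def indicator_def)
    then have "Phi k x (y x) + \<Gamma> x \<le> Phi k x w + gw" using elim(3) by (auto simp: A_def)
    then have "ereal (Phi k x (y x)) + g (y x) \<le> ereal (Phi k x w) + g w" using elim(2) gw by simp
    then show ?case by (simp add: y_def)
  qed
qed

end


lemma seq_close_tendsto:
  fixes ws :: "nat \<Rightarrow> real"
  assumes "\<And>n. \<bar>ws n - v\<bar> < 2 / Suc n"
  shows "ws \<longlonglongrightarrow> v"
proof (rule LIM_zero_cancel, rule Lim_null_comparison)
  show "\<forall>\<^sub>F n in sequentially. norm (ws n - v) \<le> 2 * inverse (real (Suc n))"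
    using assms by (intro always_eventually allI) (simp add: less_imp_le field_simps)
  show "(\<lambda>n. 2 * inverse (real (Suc n))) \<longlonglongrightarrow> 0"
    using tendsto_mult_right_zero[OF LIMSEQ_inverse_real_of_nat, of 2] by simp
qed

lemma convex_real_between:
  fixes S :: "real set"
  assumes "convex S" "a \<in> S" "b \<in> S" "a \<le> t" "t \<le> b"
  shows "t \<in> S"
  using assms is_interval_convex_1[of S] is_interval_1[of S] by blast

lemma conv_inf_mem:
  fixes zs ys :: "nat \<Rightarrow> real"
  assumes zs: "zs \<longlonglongrightarrow> z" and ev: "eventually (\<lambda>n. ys n \<in> F (zs n)) sequentially"
    and osc: "\<forall>e>0. \<forall>N. (\<exists>n\<ge>N. ys n < u + e) \<and> (\<exists>n\<ge>N. u - e < ys n)"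
  shows "u \<in> conv_inf F z"
proof -
  define C where "C = (\<lambda>k. convex hull (\<Union>x' \<in> {x'. \<bar>x' - z\<bar> < 1 / real (Suc k)}. F x'))"
  have ex: "\<exists>c. c \<in> C j \<and> \<bar>c - u\<bar> < 2 / Suc j" for j
  proof -
    define e where "e = 1 / real (Suc j)"
    have e: "e > 0" by (simp add: e_def)
    have "eventually (\<lambda>n. \<bar>zs n - z\<bar> < e) sequentially"
      using zs e unfolding tendsto_iff dist_real_def by blast
    with ev have "eventually (\<lambda>n. ys n \<in> C j) sequentially"
    proof eventually_elim
      case (elim n)
      then have "ys n \<in> (\<Union>x' \<in> {x'. \<bar>x' - z\<bar> < 1 / real (Suc j)}. F x')" by (auto simp: e_def)
      then show ?case unfolding C_def by (rule hull_inc)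
    qed
    then obtain N where N: "\<And>n. n \<ge> N \<Longrightarrow> ys n \<in> C j" by (auto simp: eventually_sequentially)
    obtain n1 where n1: "n1 \<ge> N" "ys n1 < u + e" using osc e by blast
    obtain n2 where n2: "n2 \<ge> N" "u - e < ys n2" using osc e by blast
    have a: "ys n1 \<in> C j" "ys n2 \<in> C j" using N n1 n2 by auto
    have e2: "e < 2 / Suc j" by (simp add: e_def divide_strict_right_mono)
    show ?thesis
    proof (cases "u \<le> ys n1")
      case True
      then have "\<bar>ys n1 - u\<bar> < 2 / Suc j" using n1 e2 by simp
      then show ?thesis using a by blast
    next
      case f1: False
      show ?thesis
      proof (cases "ys n2 \<le> u")
        case True
        then have "\<bar>ys n2 - u\<bar> < 2 / Suc j" using n2 e2 by simp
        then show ?thesis using a by blast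
      next
        case False
        have "u \<in> C j" unfolding C_def
          by (rule convex_real_between[OF convex_convex_hull a[unfolded C_def]]) (use f1 False in auto)
        then show ?thesis by (intro exI[of _ u]) simp
      qed
    qed
  qed
  then obtain yy where yy: "\<And>j. yy j \<in> C j" "\<And>j. \<bar>yy j - u\<bar> < 2 / Suc j" by metis
  have "yy \<longlonglongrightarrow> u" by (rule seq_close_tendsto[OF yy(2)])
  moreover have "strict_mono (id :: nat \<Rightarrow> nat)" by (simp add: strict_mono_def)
  ultimately show ?thesis unfolding conv_inf_def outer_limit_def C_def[symmetric]
    using yy(1) by (intro CollectI exI[of _ id] exI[of _ yy]) auto
qed

lemma ereal_shift:
  assumes "ereal a + X \<le> ereal b + Y" "b - a = d - c"
  shows "ereal c + X \<le> ereal d + Y"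
  using assms by (cases X; cases Y) auto

context setting begin

lemma approx_family:
  "\<exists>W. \<forall>(q::rat) (n::nat). \<bar>W q n - of_rat q\<bar> < 1 / Suc n \<and>
      (\<forall>w. \<bar>w - of_rat q\<bar> < 1 / Suc n \<longrightarrow> g (W q n) \<le> g w + ereal (1 / Suc n))"
proof -
  have "\<forall>(q::rat) (n::nat). \<exists>w'. \<bar>w' - of_rat q\<bar> < 1 / Suc n \<and>
      (\<forall>w. \<bar>w - of_rat q\<bar> < 1 / Suc n \<longrightarrow> g w' \<le> g w + ereal (1 / Suc n))"
  proof (intro allI)
    fix q :: rat and n :: nat
    define I where "I = {w. \<bar>w - of_rat q\<bar> < 1 / Suc n}"
    show "\<exists>w'. \<bar>w' - of_rat q\<bar> < 1 / Suc n \<and>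
      (\<forall>w. \<bar>w - of_rat q\<bar> < 1 / Suc n \<longrightarrow> g w' \<le> g w + ereal (1 / Suc n))"
    proof (cases "\<forall>w\<in>I. g w = \<infinity>")
      case True
      show ?thesis
        by (intro exI[of _ "of_rat q"]) (use True in \<open>auto simp: I_def\<close>)
    next
      case False
      then obtain w0 where w0: "w0 \<in> I" "g w0 \<noteq> \<infinity>" by blast
      define m where "m = Inf (g ` I)"
      have mle: "m \<le> g w0" unfolding m_def using w0 by (simp add: INF_lower)
      have m0: "0 \<le> m" unfolding m_def by (rule Inf_greatest) (auto simp: g_nonneg)
      have mfin: "m \<noteq> \<infinity>" "m \<noteq> -\<infinity>" using mle w0 m0 by auto
      then have "m < m + ereal (1 / Suc n)" by (cases m) auto
      then obtain w' where w': "w' \<in> I" "g w' < m + ereal (1 / Suc n)"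
        unfolding m_def Inf_less_iff by auto
      show ?thesis
      proof (intro exI[of _ w'] conjI allI impI)
        show "\<bar>w' - of_rat q\<bar> < 1 / Suc n" using w' by (simp add: I_def)
        fix w assume "\<bar>w - of_rat q\<bar> < 1 / Suc n"
        then have "m \<le> g w" unfolding m_def by (intro INF_lower) (simp add: I_def)
        then have "m + ereal (1 / Suc n) \<le> g w + ereal (1 / Suc n)" by (rule add_right_mono)
        then show "g w' \<le> g w + ereal (1 / Suc n)" using w' by simp
      qed
    qed
  qed
  then show ?thesis by metis
qed

lemma prox_pointwise:
  "AE x in lebesgue_on \<Omega>. \<forall>k. pmin g L (L * uu k x - gradf (uu k) x) (uu (Suc k) x)"
proof -
  obtain W where W: "\<And>(q::rat) (n::nat). \<bar>W q n - of_rat q\<bar> < 1 / Suc n"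
    "\<And>q n w. \<bar>w - of_rat q\<bar> < 1 / Suc n \<Longrightarrow> g (W q n) \<le> g w + ereal (1 / Suc n)"
    using approx_family by blast
  have "AE x in lebesgue_on \<Omega>. \<forall>k. (ereal (Phi k x (uu (Suc k) x)) + g (uu (Suc k) x) \<le> ereal (Phi k x 0) + g 0) \<and>
       (\<forall>q n. ereal (Phi k x (uu (Suc k) x)) + g (uu (Suc k) x) \<le> ereal (Phi k x (W q n)) + g (W q n))"
    by (simp add: AE_all_countable AE_conj_iff prox_pointwise_w)
  then show ?thesis
  proof (rule AE_mp, intro AE_I2 impI allI)
    fix x k
    assume a: "\<forall>k. (ereal (Phi k x (uu (Suc k) x)) + g (uu (Suc k) x) \<le> ereal (Phi k x 0) + g 0) \<and>
       (\<forall>q n. ereal (Phi k x (uu (Suc k) x)) + g (uu (Suc k) x) \<le> ereal (Phi k x (W q n)) + g (W q n))"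
    define y where "y = uu (Suc k) x"
    have a0: "ereal (Phi k x y) + g y \<le> ereal (Phi k x 0) + g 0" using a unfolding y_def by blast
    have aW: "\<And>q n. ereal (Phi k x y) + g y \<le> ereal (Phi k x (W q n)) + g (W q n)" using a unfolding y_def by blast
    have "g y \<noteq> \<infinity>" using a0 g0 by auto
    then obtain Y where gy: "g y = ereal Y" using g_nonneg[of y] by (cases "g y") auto
    have main: "ereal (Phi k x y) + g y \<le> ereal (Phi k x v) + g v" for v
    proof (cases "g v = \<infinity>")
      case True then show ?thesis using gy by simp
    next
      case False
      then obtain gv where gv: "g v = ereal gv" using g_nonneg[of v] by (cases "g v") auto
      have "\<forall>n. \<exists>w'. \<bar>w' - v\<bar> < 2 / Suc n \<and> Phi k x y + Y \<le> Phi k x w' + gv + 1 / Suc n"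
      proof
        fix n :: nat
        have "v - 1 / Suc n < v + 1 / Suc n" by simp
        then obtain r where r: "r \<in> \<rat>" "v - 1 / Suc n < r" "r < v + 1 / Suc n"
          using Rats_dense_in_real by blast
        then obtain q where q: "r = of_rat q" by (auto elim: Rats_cases)
        have vq: "\<bar>v - of_rat q\<bar> < 1 / Suc n" using r q by auto
        have "ereal (Phi k x y) + ereal Y \<le> ereal (Phi k x (W q n)) + g (W q n)" using aW gy by simp
        also have "\<dots> \<le> ereal (Phi k x (W q n)) + (ereal gv + ereal (1 / Suc n))"
          using W(2)[OF vq] gv by (intro add_left_mono) simp
        finally have "Phi k x y + Y \<le> Phi k x (W q n) + gv + 1 / Suc n" by simp
        moreover have "\<bar>W q n - v\<bar> < 2 / Suc n" using W(1)[of q n] vq by simp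
        ultimately show "\<exists>w'. \<bar>w' - v\<bar> < 2 / Suc n \<and> Phi k x y + Y \<le> Phi k x w' + gv + 1 / Suc n"
          by blast
      qed
      then obtain ws where ws: "\<And>n. \<bar>ws n - v\<bar> < 2 / Suc n"
        "\<And>n. Phi k x y + Y \<le> Phi k x (ws n) + gv + 1 / Suc n" by metis
      have wsl: "ws \<longlonglongrightarrow> v" by (rule seq_close_tendsto[OF ws(1)])
      have "(\<lambda>n. Phi k x (ws n) + gv + inverse (real (Suc n))) \<longlonglongrightarrow> Phi k x v + gv + 0"
        unfolding Phi_def by (intro tendsto_intros wsl LIMSEQ_inverse_real_of_nat)
      then have "Phi k x y + Y \<le> Phi k x v + gv"
        by (intro LIMSEQ_le_const[of _ "Phi k x v + gv"]) (use ws(2) in \<open>auto simp: inverse_eq_divide\<close>)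
      then show ?thesis using gy gv by simp
    qed
    show "pmin g L (L * uu k x - gradf (uu k) x) (uu (Suc k) x)"
      unfolding pmin_def using main unfolding y_def Phi_def by blast
  qed
qed

lemma pmin_GL: "pmin g L p y \<Longrightarrow> y \<in> GL g L (p - L * y)"
  unfolding pmin_def GL_def
proof (intro CollectI allI)
  fix v assume a: "\<forall>v. ereal (L / 2 * y\<^sup>2 - p * y) + g y \<le> ereal (L / 2 * v\<^sup>2 - p * v) + g v"
  show "ereal (- (p - L * y) * y + L / 2 * (y - y)\<^sup>2) + g y \<le> ereal (- (p - L * y) * v + L / 2 * (v - y)\<^sup>2) + g v"
    by (rule ereal_shift[OF a[rule_format, of v]]) (simp add: algebra_simps power2_eq_square)
qed

lemma GL_zero_closed:
  assumes zs: "zs \<longlonglongrightarrow> z" and ev: "eventually (\<lambda>n. 0 \<in> GL g L (zs n)) sequentially"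
  shows "0 \<in> GL g L z"
  unfolding GL_def
proof (intro CollectI allI)
  fix v
  show "ereal (- z * 0 + L / 2 * (0 - 0)\<^sup>2) + g 0 \<le> ereal (- z * v + L / 2 * (v - 0)\<^sup>2) + g v"
  proof (cases "g v = \<infinity>")
    case True then show ?thesis using g0 by simp
  next
    case False
    then obtain gv where gv: "g v = ereal gv" using g_nonneg[of v] by (cases "g v") auto
    have "eventually (\<lambda>n. 0 \<le> - zs n * v + L / 2 * v\<^sup>2 + gv) sequentially"
      using ev
    proof eventually_elim
      case (elim n)
      then have "ereal (- zs n * 0 + L / 2 * (0 - 0)\<^sup>2) + g 0 \<le> ereal (- zs n * v + L / 2 * (v - 0)\<^sup>2) + g v"
        unfolding GL_def by blast
      then show ?case using g0 gv by simp
    qed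
    moreover have "(\<lambda>n. - zs n * v + L / 2 * v\<^sup>2 + gv) \<longlonglongrightarrow> - z * v + L / 2 * v\<^sup>2 + gv"
      by (intro tendsto_intros zs)
    ultimately have "0 \<le> - z * v + L / 2 * v\<^sup>2 + gv"
      by (intro LIMSEQ_le_const[of _ "- z * v + L / 2 * v\<^sup>2 + gv"]) (auto simp: eventually_sequentially)
    then show ?thesis using g0 gv by simp
  qed
qed

end


lemma eventually_sign_const:
  fixes u :: "nat \<Rightarrow> real"
  assumes d: "(\<lambda>k. u (Suc k) - u k) \<longlonglongrightarrow> 0" and dp: "\<delta> > 0"
    and gapk: "\<And>k. u (Suc k) \<noteq> 0 \<Longrightarrow> \<delta> \<le> \<bar>u (Suc k)\<bar>"
  shows "\<exists>K. (\<forall>k\<ge>K. u k = 0) \<or> (\<forall>k\<ge>K. u k > 0) \<or> (\<forall>k\<ge>K. u k < 0)"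
proof -
  obtain K0 where K0: "\<And>k. k \<ge> K0 \<Longrightarrow> \<bar>u (Suc k) - u k\<bar> < \<delta>"
    using d dp unfolding LIMSEQ_def dist_real_def by (metis diff_zero)
  define K where "K = Suc K0"
  have K0K: "K0 \<le> K" by (simp add: K_def)
  have gK: "u K \<noteq> 0 \<Longrightarrow> \<delta> \<le> \<bar>u K\<bar>" unfolding K_def by (rule gapk)
  consider "u K = 0" | "u K > 0" | "u K < 0" by linarith
  then show ?thesis
  proof cases
    case 1
    have "u k = 0" if "K \<le> k" for k
      using that
    proof (induction k rule: dec_induct)
      case base then show ?case using 1 .
    next
      case (step n)
      have "K0 \<le> n" using step(1) K0K by linarith
      then have "\<bar>u (Suc n) - u n\<bar> < \<delta>" by (rule K0)
      then have "\<bar>u (Suc n)\<bar> < \<delta>" using step by simp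
      then show ?case using gapk[of n] by linarith
    qed
    then show ?thesis by blast
  next
    case 2
    have "u k > 0" if "K \<le> k" for k
      using that
    proof (induction k rule: dec_induct)
      case base then show ?case using 2 .
    next
      case (step n)
      have "K0 \<le> n" using step(1) K0K by linarith
      then have "\<bar>u (Suc n) - u n\<bar> < \<delta>" by (rule K0)
      moreover have "\<delta> \<le> \<bar>u n\<bar>"
      proof (cases n)
        case 0 then show ?thesis using step K_def by simp
      next
        case (Suc m) then show ?thesis using gapk[of m] step by simp
      qed
      ultimately show ?case using step by linarith
    qed
    then show ?thesis by blast
  next
    case 3
    have "u k < 0" if "K \<le> k" for k
      using that
    proof (induction k rule: dec_induct)
      case base then show ?case using 3 .
    next
      case (step n)
      have "K0 \<le> n" using step(1) K0K by linarith
      then have "\<bar>u (Suc n) - u n\<bar> < \<delta>" by (rule K0)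
      moreover have "\<delta> \<le> \<bar>u n\<bar>"
      proof (cases n)
        case 0 then show ?thesis using step K_def by simp
      next
        case (Suc m) then show ?thesis using gapk[of m] step by simp
      qed
      ultimately show ?case using step by linarith
    qed
    then show ?thesis by blast
  qed
qed

context setting begin

lemma main:
  assumes r: "strict_mono r" and wc: "weak_conv_L2 \<Omega> (\<lambda>n. uu (r n)) ustar"
    and gc: "AE x in lebesgue_on \<Omega>. (\<lambda>n. gradf (uu (r n)) x) \<longlonglongrightarrow> gradf ustar x"
  shows "AE x in lebesgue_on \<Omega>.
           ustar x \<in> Gzero g L (- gradf ustar x) \<union> conv_inf (Gplus g L) (- gradf ustar x)
                       \<union> conv_inf (Gminus g L) (- gradf ustar x)"
proof -
  obtain \<delta> where dp: "\<delta> > 0" and gp: "\<And>p y. pmin g L p y \<Longrightarrow> y \<noteq> 0 \<Longrightarrow> \<delta> \<le> \<bar>y\<bar>"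
    using gap by blast
  show ?thesis
    using prox_pointwise ae_diff0 weak_ae[OF \<Omega>l \<Omega>fin wc] gc
  proof eventually_elim
    case (elim x)
    define u where "u = (\<lambda>k. uu k x)"
    define p where "p = (\<lambda>k. L * uu k x - gradf (uu k) x)"
    define z where "z = - gradf ustar x"
    define us where "us = ustar x"
    have pm: "\<And>k. pmin g L (p k) (u (Suc k))" using elim(1) unfolding u_def p_def by blast
    have d: "(\<lambda>k. u (Suc k) - u k) \<longlonglongrightarrow> 0" using elim(2) unfolding u_def .
    have osc: "\<forall>e>0. \<forall>N. (\<exists>n\<ge>N. u (r n) < us + e) \<and> (\<exists>n\<ge>N. us - e < u (r n))"
      using elim(3) unfolding u_def us_def .
    have gcx: "(\<lambda>n. gradf (uu (r n)) x) \<longlonglongrightarrow> gradf ustar x" using elim(4) .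
    define zs where "zs = (\<lambda>n. p (r n) - L * u (Suc (r n)))"
    define ys where "ys = (\<lambda>n. u (Suc (r n)))"
    have dr: "(\<lambda>n. u (Suc (r n)) - u (r n)) \<longlonglongrightarrow> 0"
      using LIMSEQ_subseq_LIMSEQ[OF d r] by (simp add: o_def)
    have zs_eq: "zs = (\<lambda>n. - L * (u (Suc (r n)) - u (r n)) - gradf (uu (r n)) x)"
      by (rule ext) (simp add: zs_def p_def u_def algebra_simps)
    have zsl: "zs \<longlonglongrightarrow> z"
    proof -
      have "(\<lambda>n. - L * (u (Suc (r n)) - u (r n)) - gradf (uu (r n)) x) \<longlonglongrightarrow> - L * 0 - gradf ustar x"
        by (intro tendsto_intros dr gcx)
      then show ?thesis unfolding zs_eq z_def by simp
    qed
    have ysG: "\<And>n. ys n \<in> GL g L (zs n)" unfolding ys_def zs_def by (rule pmin_GL[OF pm])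
    have oscy: "\<forall>e>0. \<forall>N. (\<exists>n\<ge>N. ys n < us + e) \<and> (\<exists>n\<ge>N. us - e < ys n)"
    proof (intro allI impI)
      fix e :: real and N assume e: "e > 0"
      then have e2: "e / 2 > 0" by simp
      obtain N1 where N1: "\<And>n. n \<ge> N1 \<Longrightarrow> \<bar>u (Suc (r n)) - u (r n)\<bar> < e / 2"
        using dr e2 unfolding LIMSEQ_def dist_real_def by (metis diff_zero)
      obtain n1 where n1: "n1 \<ge> max N N1" "u (r n1) < us + e / 2" using osc e2 by blast
      obtain n2 where n2: "n2 \<ge> max N N1" "us - e / 2 < u (r n2)" using osc e2 by blast
      have "\<bar>u (Suc (r n1)) - u (r n1)\<bar> < e / 2" "\<bar>u (Suc (r n2)) - u (r n2)\<bar> < e / 2"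
        using N1 n1 n2 by auto
      then have "ys n1 < us + e" "us - e < ys n2" using n1 n2 unfolding ys_def by linarith+
      then show "(\<exists>n\<ge>N. ys n < us + e) \<and> (\<exists>n\<ge>N. us - e < ys n)" using n1 n2 by auto
    qed
    have gapk: "\<And>k. u (Suc k) \<noteq> 0 \<Longrightarrow> \<delta> \<le> \<bar>u (Suc k)\<bar>" using gp pm by blast
    obtain K where K: "(\<forall>k\<ge>K. u k = 0) \<or> (\<forall>k\<ge>K. u k > 0) \<or> (\<forall>k\<ge>K. u k < 0)"
      using eventually_sign_const[OF d dp gapk] by blast
    have evK: "eventually (\<lambda>n. K \<le> Suc (r n)) sequentially"
      unfolding eventually_sequentially
      by (intro exI[of _ K] allI impI) (use seq_suble[OF r] le_SucI order_trans in blast)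
    from K show "ustar x \<in> Gzero g L (- gradf ustar x) \<union> conv_inf (Gplus g L) (- gradf ustar x)
                       \<union> conv_inf (Gminus g L) (- gradf ustar x)"
    proof (elim disjE)
      assume a: "\<forall>k\<ge>K. u k = 0"
      have ev0: "eventually (\<lambda>n. ys n = 0) sequentially"
        using evK by eventually_elim (simp add: ys_def a)
      have "eventually (\<lambda>n. 0 \<in> GL g L (zs n)) sequentially"
        using ev0 by eventually_elim (use ysG in metis)
      then have g0z: "0 \<in> GL g L z" by (rule GL_zero_closed[OF zsl])
      obtain N0 where N0: "\<And>n. n \<ge> N0 \<Longrightarrow> ys n = 0" using ev0 by (auto simp: eventually_sequentially)
      have "us = 0"
      proof (rule ccontr)
        assume ne: "us \<noteq> 0"
        then have e: "\<bar>us\<bar> / 2 > 0" by simp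
        obtain n1 where n1: "n1 \<ge> N0" "ys n1 < us + \<bar>us\<bar> / 2" using oscy e by blast
        obtain n2 where n2: "n2 \<ge> N0" "us - \<bar>us\<bar> / 2 < ys n2" using oscy e by blast
        have "0 < us + \<bar>us\<bar> / 2" "us - \<bar>us\<bar> / 2 < 0" using n1 n2 N0 by auto
        then show False using ne by (cases "us > 0") auto
      qed
      then have "ustar x \<in> Gzero g L (- gradf ustar x)"
        using g0z unfolding Gzero_def us_def z_def by simp
      then show ?thesis by blast
    next
      assume a: "\<forall>k\<ge>K. u k > 0"
      have "eventually (\<lambda>n. ys n \<in> Gplus g L (zs n)) sequentially"
        using evK by eventually_elim (use a ysG in \<open>auto simp: Gplus_def ys_def\<close>)
      then have "us \<in> conv_inf (Gplus g L) z" by (rule conv_inf_mem[OF zsl _ oscy])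
      then show ?thesis unfolding us_def z_def by blast
    next
      assume a: "\<forall>k\<ge>K. u k < 0"
      have "eventually (\<lambda>n. ys n \<in> Gminus g L (zs n)) sequentially"
        using evK by eventually_elim (use a ysG in \<open>auto simp: Gminus_def ys_def\<close>)
      then have "us \<in> conv_inf (Gminus g L) z" by (rule conv_inf_mem[OF zsl _ oscy])
      then show ?thesis unfolding us_def z_def by blast
    qed
  qed
qed

end


theorem theorem4p11:
  fixes \<Omega> :: "'a::euclidean_space set"
    and f :: "('a \<Rightarrow> real) \<Rightarrow> real" and gradf :: "('a \<Rightarrow> real) \<Rightarrow> 'a \<Rightarrow> real"
    and Lf L :: real and g :: "real \<Rightarrow> ereal"
    and uu :: "nat \<Rightarrow> 'a \<Rightarrow> real" and r :: "nat \<Rightarrow> nat" and ustar :: "'a \<Rightarrow> real"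
  assumes "\<Omega> \<in> sets lebesgue" and "emeasure lebesgue \<Omega> < \<infinity>"
    and "assumption_A \<Omega> f gradf Lf"
    and "assumption_B g"
    and "L > Lf" and "1 / L > s0 g"
    and "prox_grad_iterates \<Omega> f gradf g L uu"
    and "strict_mono r" and "weak_conv_L2 \<Omega> (\<lambda>n. uu (r n)) ustar"
    and "AE x in lebesgue_on \<Omega>. (\<lambda>n. gradf (uu (r n)) x) \<longlonglongrightarrow> gradf ustar x"
  shows "AE x in lebesgue_on \<Omega>.
           ustar x \<in> Gzero g L (- gradf ustar x) \<union> conv_inf (Gplus g L) (- gradf ustar x)
                       \<union> conv_inf (Gminus g L) (- gradf ustar x)"
  proof -
  interpret setting \<Omega> f gradf Lf g L uu
    by unfold_locales (use assms in auto)
  show ?thesis by (rule main[OF assms(8,9,10)])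
qed

end
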